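(* Let $\mathbf t:\mathcal D\to\mathcal T$ be a refinement system, $c:A\to B$ in $\mathcal T$, and $P\sqsubset A$. If the pushforward $c_!P$ exists in $\mathbf t$, then there are natural isomorphisms of presheaves on $B^{+}$: (a) $(c_!P)^{+}\cong{}^{\perp_B}\big((c^{-})^*P^{-}\big)$; (b) $(c_!P)^{+}\cong{}^{\perp_B}\Big(\big((c^{+})_!P^{+}\big)^{\perp_B}\Big)$.
   Context: A refinement system is a functor $\mathbf{t}:\mathcal{D}\to\mathcal{T}$; composition is diagrammatic. Write $P\sqsubset A$ if $\mathbf t(P)=A$; a derivation of $P\Rightarrow_cQ$ is a morphism $\alpha:P\to Q$ with $\mathbf t(\alpha)=c$. A pushforward of $P\sqsubset A$ along $c:A\to B$ is $c_!P\sqsubset B$ with a derivation $\kappa$ of $P\Rightarrow_cc_!P$ such that pre-composition with $\kappa$ is a bijection from derivations of $c_!P\Rightarrow_dQ$ to derivations of $P\Rightarrow_{c;d}Q$ for all $Q\sqsubset Y$, $d:B\to Y$. For $B\in\mathcal T$: $B^{+}$ has objects $(P,c)$, $P\sqsubset X$, $c:X\to B$, morphisms $(P_1,c_1)\to(P_2,c_2)$ the derivations of $P_1\Rightarrow_eP_2$ with $c_1=e;c_2$; $B^{-}$ is the opposite of the category with objects $(d,R)$, $d:B\to Y$, $R\sqsubset Y$, morphisms $(d_1,R_1)\to(d_2,R_2)$ the derivations of $R_1\Rightarrow_eR_2$ with $d_1;e=d_2$. For $Q\sqsubset B$: $Q^{+}:(B^{+})^{op}\to\mathbf{Set}$, $(P,c)\mapsto$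 derivations of $P\Rightarrow_cQ$ (acting by precomposition), and $Q^{-}:(B^{-})^{op}\to\mathbf{Set}$, $(d,R)\mapsto$ derivations of $Q\Rightarrow_dR$ (acting by postcomposition). For $c:A\to B$: $c^{+}:A^{+}\to B^{+}$, $(P,e)\mapsto(P,e;c)$; $c^{-}:B^{-}\to A^{-}$, $(d,R)\mapsto(c;d,R)$. $\mathrm{Jdg}(\mathbf t)$ has objects $(P,c,R)$ and morphisms $(P_1,c_1,R_1)\to(P_2,c_2,R_2)$ pairs of derivations $\beta$ of $P_1\Rightarrow_eP_2$, $\gamma$ of $R_2\Rightarrow_{e'}R_1$ with $c_1=e;c_2;e'$; $\mathrm{Der}$ sends $(P,c,R)$ to the set of derivations of $P\Rightarrow_cR$ and $(\beta,\gamma)$ to $\alpha\mapsto\beta;\alpha;\gamma$. Bracket $\langle-\mid-\rangle_B:B^{+}\times B^{-}\to\mathrm{Jdg}(\mathbf t)$: $((P,c),(d,R))\mapsto(P,c;d,R)$. Duals: for $\phi$ on $B^{+}$, $\phi^{\perp_B}(y)=$ natural transformations $\phi\Rightarrow\mathrm{Der}(\langle-\mid y\rangle_B)$ (presheaf on $B^{-}$); for $\psi$ on $B^{-}$, ${}^{\perp_B}\psi(x)=$ natural transformations $\psi\Rightarrow\mathrm{Der}(\langle x\mid-\rangle_B)$ (presheaf on $B^{+}$). For a functor $F:\mathcal X\to\mathcal Y$: $F^*\psi=\psi\circ F^{op}$ and $F_!\chi(y)=\int^{x}\mathcal Y(y,Fx)\times\chi(x)$. *)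

theory Defs
  imports Main
begin

text \<open>Composition is diagrammatic: cCmp C f g means f;g (first f, then g).\<close>

record ('o, 'm) cat =
  cOb  :: "'o set"
  cAr  :: "'m set"
  cDom :: "'m \<Rightarrow> 'o"
  cCod :: "'m \<Rightarrow> 'o"
  cId  :: "'o \<Rightarrow> 'm"
  cCmp :: "'m \<Rightarrow> 'm \<Rightarrow> 'm"

definition is_category :: "('o, 'm, 'z) cat_scheme \<Rightarrow> bool" where
  "is_category C \<longleftrightarrow>
     (\<forall>f\<in>cAr C. cDom C f \<in> cOb C \<and> cCod C f \<in> cOb C)
   \<and> (\<forall>a\<in>cOb C. cId C a \<in> cAr C \<and> cDom C (cId C a) = a \<and> cCod C (cId C a) = a)
   \<and> (\<forall>f\<in>cAr C. \<forall>g\<in>cAr C. cCod C f = cDom C g \<longrightarrow>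
        cCmp C f g \<in> cAr C \<and> cDom C (cCmp C f g) = cDom C f \<and> cCod C (cCmp C f g) = cCod C g)
   \<and> (\<forall>f\<in>cAr C. cCmp C (cId C (cDom C f)) f = f \<and> cCmp C f (cId C (cCod C f)) = f)
   \<and> (\<forall>f\<in>cAr C. \<forall>g\<in>cAr C. \<forall>h\<in>cAr C. cCod C f = cDom C g \<longrightarrow> cCod C g = cDom C h \<longrightarrow>
        cCmp C (cCmp C f g) h = cCmp C f (cCmp C g h))"

definition is_functor ::
  "('o1, 'm1, 'z1) cat_scheme \<Rightarrow> ('o2, 'm2, 'z2) cat_scheme \<Rightarrow>
   ('o1 \<Rightarrow> 'o2) \<Rightarrow> ('m1 \<Rightarrow> 'm2) \<Rightarrow> bool" where
  "is_functor C D Fo Fa \<longleftrightarrow>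
     (\<forall>a\<in>cOb C. Fo a \<in> cOb D)
   \<and> (\<forall>f\<in>cAr C. Fa f \<in> cAr D \<and> cDom D (Fa f) = Fo (cDom C f) \<and> cCod D (Fa f) = Fo (cCod C f))
   \<and> (\<forall>a\<in>cOb C. Fa (cId C a) = cId D (Fo a))
   \<and> (\<forall>f\<in>cAr C. \<forall>g\<in>cAr C. cCod C f = cDom C g \<longrightarrow> Fa (cCmp C f g) = cCmp D (Fa f) (Fa g))"

text \<open>A presheaf (Set-valued contravariant functor) on a category C:
  psh_ob x is a set, and for an arrow g, psh_ar g maps psh_ob (cod g) to psh_ob (dom g).\<close>

record ('o, 'm, 'x) psh =
  psh_ob :: "'o \<Rightarrow> 'x set"
  psh_ar :: "'m \<Rightarrow> 'x \<Rightarrow> 'x"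

definition nat_iso :: "('o, 'm, 'z) cat_scheme \<Rightarrow> ('o, 'm, 'x) psh \<Rightarrow> ('o, 'm, 'y) psh \<Rightarrow> bool" where
  "nat_iso C F G \<longleftrightarrow> (\<exists>\<eta> :: 'o \<Rightarrow> 'x \<Rightarrow> 'y.
     (\<forall>x\<in>cOb C. bij_betw (\<eta> x) (psh_ob F x) (psh_ob G x))
   \<and> (\<forall>g\<in>cAr C. \<forall>a\<in>psh_ob F (cCod C g).
        \<eta> (cDom C g) (psh_ar F g a) = psh_ar G g (\<eta> (cCod C g) a)))"

definition nat_trans :: "('o, 'm, 'z) cat_scheme \<Rightarrow> ('o, 'm, 'x) psh \<Rightarrow> ('o, 'm, 'y) psh
    \<Rightarrow> ('o \<Rightarrow> 'x \<Rightarrow> 'y) set" where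
  "nat_trans C F G = {\<theta>.
     (\<forall>x\<in>cOb C. \<forall>a\<in>psh_ob F x. \<theta> x a \<in> psh_ob G x)
   \<and> (\<forall>g\<in>cAr C. \<forall>a\<in>psh_ob F (cCod C g).
        \<theta> (cDom C g) (psh_ar F g a) = psh_ar G g (\<theta> (cCod C g) a))
   \<and> (\<forall>x a. (x \<notin> cOb C \<or> a \<notin> psh_ob F x) \<longrightarrow> \<theta> x a = undefined)}"

definition pb_psh :: "('o1 \<Rightarrow> 'o2) \<Rightarrow> ('m1 \<Rightarrow> 'm2) \<Rightarrow> ('o2, 'm2, 'x) psh \<Rightarrow> ('o1, 'm1, 'x) psh" where
  "pb_psh Fo Fa \<psi> = \<lparr> psh_ob = (\<lambda>x. psh_ob \<psi> (Fo x)), psh_ar = (\<lambda>g. psh_ar \<psi> (Fa g)) \<rparr>"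

text \<open>Left Kan extension F_! chi (y) = coend over x of Y(y, F x) \<times> chi(x), computed in Set:
  triples (x, f, a) modulo the equivalence relation generated by
  (x, f, chi(g) a') ~ (x', f;F(g), a') for g : x \<rightarrow> x'.\<close>

definition lan_carrier ::
  "('o1, 'm1, 'z1) cat_scheme \<Rightarrow> ('o2, 'm2, 'z2) cat_scheme \<Rightarrow> ('o1 \<Rightarrow> 'o2) \<Rightarrow>
   ('o1, 'm1, 'x) psh \<Rightarrow> 'o2 \<Rightarrow> ('o1 \<times> 'm2 \<times> 'x) set" where
  "lan_carrier C1 C2 Fo \<chi> y = {(x, f, a). x \<in> cOb C1 \<and> f \<in> cAr C2 \<and> cDom C2 f = y
      \<and> cCod C2 f = Fo x \<and> a \<in> psh_ob \<chi> x}"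

definition lan_gen ::
  "('o1, 'm1, 'z1) cat_scheme \<Rightarrow> ('o2, 'm2, 'z2) cat_scheme \<Rightarrow> ('o1 \<Rightarrow> 'o2) \<Rightarrow> ('m1 \<Rightarrow> 'm2) \<Rightarrow>
   ('o1, 'm1, 'x) psh \<Rightarrow> 'o2 \<Rightarrow> (('o1 \<times> 'm2 \<times> 'x) \<times> ('o1 \<times> 'm2 \<times> 'x)) set" where
  "lan_gen C1 C2 Fo Fa \<chi> y = {((cDom C1 g, f, psh_ar \<chi> g a'), (cCod C1 g, cCmp C2 f (Fa g), a')) | g f a'.
      g \<in> cAr C1 \<and> f \<in> cAr C2 \<and> cDom C2 f = y \<and> cCod C2 f = Fo (cDom C1 g)
      \<and> a' \<in> psh_ob \<chi> (cCod C1 g)}"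

definition lan_equiv ::
  "('o1, 'm1, 'z1) cat_scheme \<Rightarrow> ('o2, 'm2, 'z2) cat_scheme \<Rightarrow> ('o1 \<Rightarrow> 'o2) \<Rightarrow> ('m1 \<Rightarrow> 'm2) \<Rightarrow>
   ('o1, 'm1, 'x) psh \<Rightarrow> 'o2 \<Rightarrow> (('o1 \<times> 'm2 \<times> 'x) \<times> ('o1 \<times> 'm2 \<times> 'x)) set" where
  "lan_equiv C1 C2 Fo Fa \<chi> y =
     Id_on (lan_carrier C1 C2 Fo \<chi> y) \<union> (lan_gen C1 C2 Fo Fa \<chi> y \<union> (lan_gen C1 C2 Fo Fa \<chi> y)\<inverse>)\<^sup>+"

definition lan_psh ::
  "('o1, 'm1, 'z1) cat_scheme \<Rightarrow> ('o2, 'm2, 'z2) cat_scheme \<Rightarrow> ('o1 \<Rightarrow> 'o2) \<Rightarrow> ('m1 \<Rightarrow> 'm2) \<Rightarrow>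
   ('o1, 'm1, 'x) psh \<Rightarrow> ('o2, 'm2, ('o1 \<times> 'm2 \<times> 'x) set) psh" where
  "lan_psh C1 C2 Fo Fa \<chi> =
     \<lparr> psh_ob = (\<lambda>y. lan_carrier C1 C2 Fo \<chi> y // lan_equiv C1 C2 Fo Fa \<chi> y),
       psh_ar = (\<lambda>h cls. lan_equiv C1 C2 Fo Fa \<chi> (cDom C2 h) ``
                          ((\<lambda>(x, f, a). (x, cCmp C2 h f, a)) ` cls)) \<rparr>"

definition refinement_system ::
  "('do, 'dm, 'z1) cat_scheme \<Rightarrow> ('to, 'tm, 'z2) cat_scheme \<Rightarrow> ('do \<Rightarrow> 'to) \<Rightarrow> ('dm \<Rightarrow> 'tm) \<Rightarrow> bool" where
  "refinement_system D T tO tA \<longleftrightarrow> is_category D \<and> is_category T \<and> is_functor D T tO tA"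

definition der :: "('do, 'dm, 'z1) cat_scheme \<Rightarrow> ('dm \<Rightarrow> 'tm) \<Rightarrow> 'do \<Rightarrow> 'tm \<Rightarrow> 'do \<Rightarrow> 'dm set" where
  "der D tA P c Q = {\<alpha> \<in> cAr D. cDom D \<alpha> = P \<and> cCod D \<alpha> = Q \<and> tA \<alpha> = c}"

definition is_pushforward ::
  "('do, 'dm, 'z1) cat_scheme \<Rightarrow> ('to, 'tm, 'z2) cat_scheme \<Rightarrow> ('do \<Rightarrow> 'to) \<Rightarrow> ('dm \<Rightarrow> 'tm) \<Rightarrow>
   'do \<Rightarrow> 'tm \<Rightarrow> 'do \<Rightarrow> 'dm \<Rightarrow> bool" where
  "is_pushforward D T tO tA P c Pc \<kappa> \<longleftrightarrow>
     Pc \<in> cOb D \<and> tO Pc = cCod T c \<and> \<kappa> \<in> der D tA P c Pc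
   \<and> (\<forall>Q\<in>cOb D. \<forall>d\<in>cAr T. cDom T d = cCod T c \<longrightarrow> cCod T d = tO Q \<longrightarrow>
        bij_betw (\<lambda>\<beta>. cCmp D \<kappa> \<beta>) (der D tA Pc d Q) (der D tA P (cCmp T c d) Q))"

text \<open>The category B^+. An arrow (x1, beta, x2) : x1 \<rightarrow> x2 is a derivation beta of
  P1 \<Rightarrow>_e P2 with c1 = e;c2 (endpoints recorded explicitly).\<close>

definition plus_cat ::
  "('do, 'dm, 'z1) cat_scheme \<Rightarrow> ('to, 'tm, 'z2) cat_scheme \<Rightarrow> ('do \<Rightarrow> 'to) \<Rightarrow> ('dm \<Rightarrow> 'tm) \<Rightarrow> 'to \<Rightarrow>
   ('do \<times> 'tm, ('do \<times> 'tm) \<times> 'dm \<times> ('do \<times> 'tm)) cat" where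
  "plus_cat D T tO tA B = (let Obs = {(P, c). P \<in> cOb D \<and> c \<in> cAr T \<and> cDom T c = tO P \<and> cCod T c = B} in
     \<lparr> cOb = Obs,
       cAr = {(x1, \<beta>, x2). x1 \<in> Obs \<and> x2 \<in> Obs \<and> \<beta> \<in> der D tA (fst x1) (tA \<beta>) (fst x2)
                           \<and> snd x1 = cCmp T (tA \<beta>) (snd x2)},
       cDom = (\<lambda>(x1, \<beta>, x2). x1),
       cCod = (\<lambda>(x1, \<beta>, x2). x2),
       cId = (\<lambda>x. (x, cId D (fst x), x)),
       cCmp = (\<lambda>(x1, \<beta>, x2) (y1, \<beta>', y2). (x1, cCmp D \<beta> \<beta>', y2)) \<rparr>)"

text \<open>The category B^-, the opposite of the category of pairs (d, R).
  An underlying arrow gamma : (d1,R1) \<rightarrow> (d2,R2) (a derivation of R1 \<Rightarrow>_e R2 with d1;e = d2)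
  is recorded as (y1, gamma, y2); as an arrow of B^- it goes from y2 to y1.\<close>

definition minus_cat ::
  "('do, 'dm, 'z1) cat_scheme \<Rightarrow> ('to, 'tm, 'z2) cat_scheme \<Rightarrow> ('do \<Rightarrow> 'to) \<Rightarrow> ('dm \<Rightarrow> 'tm) \<Rightarrow> 'to \<Rightarrow>
   ('tm \<times> 'do, ('tm \<times> 'do) \<times> 'dm \<times> ('tm \<times> 'do)) cat" where
  "minus_cat D T tO tA B = (let Obs = {(d, R). d \<in> cAr T \<and> cDom T d = B \<and> R \<in> cOb D \<and> cCod T d = tO R} in
     \<lparr> cOb = Obs,
       cAr = {(y1, \<gamma>, y2). y1 \<in> Obs \<and> y2 \<in> Obs \<and> \<gamma> \<in> der D tA (snd y1) (tA \<gamma>) (snd y2)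
                           \<and> cCmp T (fst y1) (tA \<gamma>) = fst y2},
       cDom = (\<lambda>(y1, \<gamma>, y2). y2),
       cCod = (\<lambda>(y1, \<gamma>, y2). y1),
       cId = (\<lambda>y. (y, cId D (snd y), y)),
       cCmp = (\<lambda>(u1, \<gamma>1, u2) (v1, \<gamma>2, v2). (v1, cCmp D \<gamma>2 \<gamma>1, u2)) \<rparr>)"

definition plus_psh :: "('do, 'dm, 'z1) cat_scheme \<Rightarrow> ('dm \<Rightarrow> 'tm) \<Rightarrow> 'do \<Rightarrow>
    ('do \<times> 'tm, ('do \<times> 'tm) \<times> 'dm \<times> ('do \<times> 'tm), 'dm) psh" where
  "plus_psh D tA Q = \<lparr> psh_ob = (\<lambda>(P, c). der D tA P c Q),
                       psh_ar = (\<lambda>(x1, \<beta>, x2) \<alpha>. cCmp D \<beta> \<alpha>) \<rparr>"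

definition minus_psh :: "('do, 'dm, 'z1) cat_scheme \<Rightarrow> ('dm \<Rightarrow> 'tm) \<Rightarrow> 'do \<Rightarrow>
    ('tm \<times> 'do, ('tm \<times> 'do) \<times> 'dm \<times> ('tm \<times> 'do), 'dm) psh" where
  "minus_psh D tA Q = \<lparr> psh_ob = (\<lambda>(d, R). der D tA Q d R),
                        psh_ar = (\<lambda>(y1, \<gamma>, y2) \<alpha>. cCmp D \<alpha> \<gamma>) \<rparr>"

definition cplus_ob :: "('to, 'tm, 'z2) cat_scheme \<Rightarrow> 'tm \<Rightarrow> 'do \<times> 'tm \<Rightarrow> 'do \<times> 'tm" where
  "cplus_ob T c = (\<lambda>(P, e). (P, cCmp T e c))"

definition cplus_ar :: "('to, 'tm, 'z2) cat_scheme \<Rightarrow> 'tm \<Rightarrow>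
    ('do \<times> 'tm) \<times> 'dm \<times> ('do \<times> 'tm) \<Rightarrow> ('do \<times> 'tm) \<times> 'dm \<times> ('do \<times> 'tm)" where
  "cplus_ar T c = (\<lambda>(x1, \<beta>, x2). (cplus_ob T c x1, \<beta>, cplus_ob T c x2))"

definition cminus_ob :: "('to, 'tm, 'z2) cat_scheme \<Rightarrow> 'tm \<Rightarrow> 'tm \<times> 'do \<Rightarrow> 'tm \<times> 'do" where
  "cminus_ob T c = (\<lambda>(d, R). (cCmp T c d, R))"

definition cminus_ar :: "('to, 'tm, 'z2) cat_scheme \<Rightarrow> 'tm \<Rightarrow>
    ('tm \<times> 'do) \<times> 'dm \<times> ('tm \<times> 'do) \<Rightarrow> ('tm \<times> 'do) \<times> 'dm \<times> ('tm \<times> 'do)" where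
  "cminus_ar T c = (\<lambda>(y1, \<gamma>, y2). (cminus_ob T c y1, \<gamma>, cminus_ob T c y2))"

definition Der_ob :: "('do, 'dm, 'z1) cat_scheme \<Rightarrow> ('dm \<Rightarrow> 'tm) \<Rightarrow> 'do \<times> 'tm \<times> 'do \<Rightarrow> 'dm set" where
  "Der_ob D tA = (\<lambda>(P, c, R). der D tA P c R)"

definition Der_ar :: "('do, 'dm, 'z1) cat_scheme \<Rightarrow> 'dm \<times> 'dm \<Rightarrow> 'dm \<Rightarrow> 'dm" where
  "Der_ar D = (\<lambda>(\<beta>, \<gamma>) \<alpha>. cCmp D (cCmp D \<beta> \<alpha>) \<gamma>)"

definition bracket :: "('to, 'tm, 'z2) cat_scheme \<Rightarrow> 'do \<times> 'tm \<Rightarrow> 'tm \<times> 'do \<Rightarrow> 'do \<times> 'tm \<times> 'do" where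
  "bracket T x y = (fst x, cCmp T (snd x) (fst y), snd y)"

definition der_left :: "('do, 'dm, 'z1) cat_scheme \<Rightarrow> ('to, 'tm, 'z2) cat_scheme \<Rightarrow> ('dm \<Rightarrow> 'tm) \<Rightarrow>
    'tm \<times> 'do \<Rightarrow> ('do \<times> 'tm, ('do \<times> 'tm) \<times> 'dm \<times> ('do \<times> 'tm), 'dm) psh" where
  "der_left D T tA y = \<lparr> psh_ob = (\<lambda>x. Der_ob D tA (bracket T x y)),
                         psh_ar = (\<lambda>(x1, \<beta>, x2). Der_ar D (\<beta>, cId D (snd y))) \<rparr>"

definition der_right :: "('do, 'dm, 'z1) cat_scheme \<Rightarrow> ('to, 'tm, 'z2) cat_scheme \<Rightarrow> ('dm \<Rightarrow> 'tm) \<Rightarrow>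
    'do \<times> 'tm \<Rightarrow> ('tm \<times> 'do, ('tm \<times> 'do) \<times> 'dm \<times> ('tm \<times> 'do), 'dm) psh" where
  "der_right D T tA x = \<lparr> psh_ob = (\<lambda>y. Der_ob D tA (bracket T x y)),
                          psh_ar = (\<lambda>(y1, \<gamma>, y2). Der_ar D (cId D (fst x), \<gamma>)) \<rparr>"

text \<open>Duals. phi^{perp_B}(y) = Nat(phi, Der(<- | y>)), a presheaf on B^-;
  ^{perp_B} psi (x) = Nat(psi, Der(<x | ->)), a presheaf on B^+.\<close>

definition perp_R :: "('do, 'dm, 'z1) cat_scheme \<Rightarrow> ('to, 'tm, 'z2) cat_scheme \<Rightarrow> ('do \<Rightarrow> 'to) \<Rightarrow>
    ('dm \<Rightarrow> 'tm) \<Rightarrow> 'to \<Rightarrow> ('do \<times> 'tm, ('do \<times> 'tm) \<times> 'dm \<times> ('do \<times> 'tm), 'x) psh \<Rightarrow>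
    ('tm \<times> 'do, ('tm \<times> 'do) \<times> 'dm \<times> ('tm \<times> 'do), ('do \<times> 'tm) \<Rightarrow> 'x \<Rightarrow> 'dm) psh" where
  "perp_R D T tO tA B \<phi> =
     \<lparr> psh_ob = (\<lambda>y. nat_trans (plus_cat D T tO tA B) \<phi> (der_left D T tA y)),
       psh_ar = (\<lambda>g \<theta> x a. if x \<in> cOb (plus_cat D T tO tA B) \<and> a \<in> psh_ob \<phi> x
                            then psh_ar (der_right D T tA x) g (\<theta> x a) else undefined) \<rparr>"

definition perp_L :: "('do, 'dm, 'z1) cat_scheme \<Rightarrow> ('to, 'tm, 'z2) cat_scheme \<Rightarrow> ('do \<Rightarrow> 'to) \<Rightarrow>
    ('dm \<Rightarrow> 'tm) \<Rightarrow> 'to \<Rightarrow> ('tm \<times> 'do, ('tm \<times> 'do) \<times> 'dm \<times> ('tm \<times> 'do), 'x) psh \<Rightarrow>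
    ('do \<times> 'tm, ('do \<times> 'tm) \<times> 'dm \<times> ('do \<times> 'tm), ('tm \<times> 'do) \<Rightarrow> 'x \<Rightarrow> 'dm) psh" where
  "perp_L D T tO tA B \<psi> =
     \<lparr> psh_ob = (\<lambda>x. nat_trans (minus_cat D T tO tA B) \<psi> (der_right D T tA x)),
       psh_ar = (\<lambda>g \<theta> y a. if y \<in> cOb (minus_cat D T tO tA B) \<and> a \<in> psh_ob \<psi> y
                            then psh_ar (der_left D T tA y) g (\<theta> y a) else undefined) \<rparr>"

end

theory Submission
  imports Defs
begin

lemma gen_equiv: assumes "G \<subseteq> S \<times> S" shows "equiv S (Id_on S \<union> (G \<union> G\<inverse>)\<^sup>+)"
proof -
  have sub: "(G \<union> G\<inverse>)\<^sup>+ \<subseteq> S \<times> S"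
    using assms trancl_subset_Sigma[of "G \<union> G\<inverse>" S] by blast
  have sy: "sym ((G \<union> G\<inverse>)\<^sup>+)" by (rule sym_trancl) (auto simp: sym_def)
  show ?thesis unfolding equiv_def refl_on_def sym_def trans_def
  proof (intro conjI allI impI)
    show "Id_on S \<union> (G \<union> G\<inverse>)\<^sup>+ \<subseteq> S \<times> S" using sub by auto
  next
    fix x y assume "(x,y) \<in> Id_on S \<union> (G \<union> G\<inverse>)\<^sup>+"
    then show "(y,x) \<in> Id_on S \<union> (G \<union> G\<inverse>)\<^sup>+" using sy unfolding sym_def by auto
  next
    fix x y z assume "(x,y) \<in> Id_on S \<union> (G \<union> G\<inverse>)\<^sup>+" "(y,z) \<in> Id_on S \<union> (G \<union> G\<inverse>)\<^sup>+"
    then show "(x,z) \<in> Id_on S \<union> (G \<union> G\<inverse>)\<^sup>+" by (auto dest: trancl_trans)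
  qed (auto)
qed

lemma gen_resp: assumes "\<And>t t'. (t,t')\<in>G \<Longrightarrow> h t = h t'" and "(t,t') \<in> Id_on S \<union> (G \<union> G\<inverse>)\<^sup>+"
  shows "h t = h t'"
proof -
  have "(t,t') \<in> (G \<union> G\<inverse>)\<^sup>+ \<Longrightarrow> h t = h t'"
  proof (induction rule: trancl_induct)
    case (base y) then show ?case using assms(1) by auto
  next
    case (step y z) then show ?case using assms(1) by auto
  qed
  then show ?thesis using assms(2) by auto
qed

lemma gen_map: assumes "\<And>t t'. (t,t')\<in>G1 \<Longrightarrow> (m t, m t') \<in> G2" and "\<And>t. t \<in> S1 \<Longrightarrow> m t \<in> S2"
  and "(t,t') \<in> Id_on S1 \<union> (G1 \<union> G1\<inverse>)\<^sup>+"
  shows "(m t, m t') \<in> Id_on S2 \<union> (G2 \<union> G2\<inverse>)\<^sup>+"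
proof -
  have "(t,t') \<in> (G1 \<union> G1\<inverse>)\<^sup>+ \<Longrightarrow> (m t, m t') \<in> (G2 \<union> G2\<inverse>)\<^sup>+"
  proof (induction rule: trancl_induct)
    case (base y) then show ?case using assms(1) by auto
  next
    case (step y z)
    then have "(m y, m z) \<in> G2 \<union> G2\<inverse>" using assms(1) by auto
    then show ?case using step by (meson trancl.trancl_into_trancl)
  qed
  then show ?thesis using assms by auto
qed

locale ctx =
  fixes D :: "('do, 'dm) cat" and T :: "('to, 'tm) cat"
    and tO :: "'do \<Rightarrow> 'to" and tA :: "'dm \<Rightarrow> 'tm"
    and A B :: 'to and c :: 'tm and P Pc :: 'do and \<kappa> :: 'dm
  assumes rs: "refinement_system D T tO tA"
    and cAr: "c \<in> cAr T" and cdom: "cDom T c = A" and ccod: "cCod T c = B"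
    and PO: "P \<in> cOb D" and tOP: "tO P = A"
    and pf: "is_pushforward D T tO tA P c Pc \<kappa>"
begin

lemma catD: "is_category D" and catT: "is_category T" and funct: "is_functor D T tO tA"
  using rs by (auto simp: refinement_system_def)

lemma D_cmp: "f\<in>cAr D \<Longrightarrow> g\<in>cAr D \<Longrightarrow> cCod D f = cDom D g \<Longrightarrow>
   cCmp D f g \<in> cAr D \<and> cDom D (cCmp D f g) = cDom D f \<and> cCod D (cCmp D f g) = cCod D g"
  using catD unfolding is_category_def by blast
lemma T_cmp: "f\<in>cAr T \<Longrightarrow> g\<in>cAr T \<Longrightarrow> cCod T f = cDom T g \<Longrightarrow>
   cCmp T f g \<in> cAr T \<and> cDom T (cCmp T f g) = cDom T f \<and> cCod T (cCmp T f g) = cCod T g"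
  using catT unfolding is_category_def by blast
lemma D_ar: "f\<in>cAr D \<Longrightarrow> cDom D f \<in> cOb D \<and> cCod D f \<in> cOb D"
  using catD unfolding is_category_def by blast
lemma T_ar: "f\<in>cAr T \<Longrightarrow> cDom T f \<in> cOb T \<and> cCod T f \<in> cOb T"
  using catT unfolding is_category_def by blast
lemma D_id: "a\<in>cOb D \<Longrightarrow> cId D a \<in> cAr D \<and> cDom D (cId D a) = a \<and> cCod D (cId D a) = a"
  using catD unfolding is_category_def by blast
lemma T_id: "a\<in>cOb T \<Longrightarrow> cId T a \<in> cAr T \<and> cDom T (cId T a) = a \<and> cCod T (cId T a) = a"
  using catT unfolding is_category_def by blast
lemma D_idl: "f\<in>cAr D \<Longrightarrow> cCmp D (cId D (cDom D f)) f = f"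
  and D_idr: "f\<in>cAr D \<Longrightarrow> cCmp D f (cId D (cCod D f)) = f"
  using catD unfolding is_category_def by blast+
lemma T_idl: "f\<in>cAr T \<Longrightarrow> cCmp T (cId T (cDom T f)) f = f"
  and T_idr: "f\<in>cAr T \<Longrightarrow> cCmp T f (cId T (cCod T f)) = f"
  using catT unfolding is_category_def by blast+
lemma D_assoc: "f\<in>cAr D \<Longrightarrow> g\<in>cAr D \<Longrightarrow> h\<in>cAr D \<Longrightarrow> cCod D f = cDom D g \<Longrightarrow> cCod D g = cDom D h \<Longrightarrow>
        cCmp D (cCmp D f g) h = cCmp D f (cCmp D g h)"
  using catD unfolding is_category_def by blast
lemma T_assoc: "f\<in>cAr T \<Longrightarrow> g\<in>cAr T \<Longrightarrow> h\<in>cAr T \<Longrightarrow> cCod T f = cDom T g \<Longrightarrow> cCod T g = cDom T h \<Longrightarrow>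
        cCmp T (cCmp T f g) h = cCmp T f (cCmp T g h)"
  using catT unfolding is_category_def by blast
lemma F_ob: "a\<in>cOb D \<Longrightarrow> tO a \<in> cOb T" using funct unfolding is_functor_def by blast
lemma F_ar: "f\<in>cAr D \<Longrightarrow> tA f \<in> cAr T \<and> cDom T (tA f) = tO (cDom D f) \<and> cCod T (tA f) = tO (cCod D f)"
  using funct unfolding is_functor_def by blast
lemma F_id: "a\<in>cOb D \<Longrightarrow> tA (cId D a) = cId T (tO a)" using funct unfolding is_functor_def by blast
lemma F_cmp: "f\<in>cAr D \<Longrightarrow> g\<in>cAr D \<Longrightarrow> cCod D f = cDom D g \<Longrightarrow> tA (cCmp D f g) = cCmp T (tA f) (tA g)"
  using funct unfolding is_functor_def by blast

lemma der_iff: "\<alpha> \<in> der D tA X e Y \<longleftrightarrow> \<alpha> \<in> cAr D \<and> cDom D \<alpha> = X \<and> cCod D \<alpha> = Y \<and> tA \<alpha> = e"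
  by (simp add: der_def)

lemma der_T: "\<alpha> \<in> der D tA X e Y \<Longrightarrow> e \<in> cAr T \<and> cDom T e = tO X \<and> cCod T e = tO Y \<and> X \<in> cOb D \<and> Y \<in> cOb D"
  unfolding der_iff using F_ar D_ar by blast

lemma der_comp: "\<alpha> \<in> der D tA X e Y \<Longrightarrow> \<beta> \<in> der D tA Y e' Z \<Longrightarrow> cCmp D \<alpha> \<beta> \<in> der D tA X (cCmp T e e') Z"
  unfolding der_iff using D_cmp F_cmp by metis

lemma der_id: "X \<in> cOb D \<Longrightarrow> cId D X \<in> der D tA X (cId T (tO X)) X"
  unfolding der_iff using D_id F_id by metis

lemma der_assoc: "\<alpha> \<in> der D tA X e Y \<Longrightarrow> \<beta> \<in> der D tA Y e' Z \<Longrightarrow> \<gamma> \<in> der D tA Z e'' W \<Longrightarrow>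
   cCmp D (cCmp D \<alpha> \<beta>) \<gamma> = cCmp D \<alpha> (cCmp D \<beta> \<gamma>)"
  unfolding der_iff using D_assoc by metis

lemma der_idl: "\<alpha> \<in> der D tA X e Y \<Longrightarrow> cCmp D (cId D X) \<alpha> = \<alpha>"
  unfolding der_iff using D_idl by metis
lemma der_idr: "\<alpha> \<in> der D tA X e Y \<Longrightarrow> cCmp D \<alpha> (cId D Y) = \<alpha>"
  unfolding der_iff using D_idr by metis

lemma T_idl': "f\<in>cAr T \<Longrightarrow> cDom T f = a \<Longrightarrow> cCmp T (cId T a) f = f" using T_idl by blast
lemma T_idr': "f\<in>cAr T \<Longrightarrow> cCod T f = a \<Longrightarrow> cCmp T f (cId T a) = f" using T_idr by blast

lemma pfD: "Pc \<in> cOb D" "tO Pc = B" "\<kappa> \<in> der D tA P c Pc"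
  "\<And>Q d. Q\<in>cOb D \<Longrightarrow> d\<in>cAr T \<Longrightarrow> cDom T d = B \<Longrightarrow> cCod T d = tO Q \<Longrightarrow>
        bij_betw (\<lambda>\<beta>. cCmp D \<kappa> \<beta>) (der D tA Pc d Q) (der D tA P (cCmp T c d) Q)"
  using pf ccod unfolding is_pushforward_def by auto

definition pfi :: "'tm \<Rightarrow> 'do \<Rightarrow> 'dm \<Rightarrow> 'dm" where
  "pfi d R a = (THE a'. a' \<in> der D tA Pc d R \<and> cCmp D \<kappa> a' = a)"

lemma pfi: assumes "d\<in>cAr T" "cDom T d = B" "R\<in>cOb D" "cCod T d = tO R"
   "a \<in> der D tA P (cCmp T c d) R"
  shows "pfi d R a \<in> der D tA Pc d R \<and> cCmp D \<kappa> (pfi d R a) = a"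
proof -
  have b: "bij_betw (\<lambda>\<beta>. cCmp D \<kappa> \<beta>) (der D tA Pc d R) (der D tA P (cCmp T c d) R)"
    using pfD(4) assms by blast
  then obtain a' where a': "a' \<in> der D tA Pc d R" "cCmp D \<kappa> a' = a"
    using assms(5) unfolding bij_betw_def by (metis imageE)
  have "\<exists>!a'. a' \<in> der D tA Pc d R \<and> cCmp D \<kappa> a' = a"
    using a' b unfolding bij_betw_def inj_on_def by metis
  then show ?thesis unfolding pfi_def by (rule theI')
qed

lemma pfi_eq: assumes "d\<in>cAr T" "cDom T d = B" "R\<in>cOb D" "cCod T d = tO R"
   "a' \<in> der D tA Pc d R"
  shows "pfi d R (cCmp D \<kappa> a') = a'"
proof -
  have b: "bij_betw (\<lambda>\<beta>. cCmp D \<kappa> \<beta>) (der D tA Pc d R) (der D tA P (cCmp T c d) R)"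
    using pfD(4) assms by blast
  have "cCmp D \<kappa> a' \<in> der D tA P (cCmp T c d) R" using b assms(5) unfolding bij_betw_def by auto
  then have "pfi d R (cCmp D \<kappa> a') \<in> der D tA Pc d R \<and> cCmp D \<kappa> (pfi d R (cCmp D \<kappa> a')) = cCmp D \<kappa> a'"
    using pfi assms by blast
  then show ?thesis using b assms(5) unfolding bij_betw_def inj_on_def by metis
qed

abbreviation "Pl X \<equiv> plus_cat D T tO tA X"
abbreviation "BM \<equiv> minus_cat D T tO tA B"
abbreviation "\<psi> \<equiv> pb_psh (cminus_ob T c) (cminus_ar T c) (minus_psh D tA P)"

lemma pl_ob[simp]: "(x \<in> cOb (Pl X)) \<longleftrightarrow> fst x \<in> cOb D \<and> snd x \<in> cAr T \<and> cDom T (snd x) = tO (fst x) \<and> cCod T (snd x) = X"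
  by (cases x) (simp add: plus_cat_def Let_def)
lemma pl_ar[simp]: "((x1,\<beta>,x2) \<in> cAr (Pl X)) \<longleftrightarrow> x1 \<in> cOb (Pl X) \<and> x2 \<in> cOb (Pl X) \<and> \<beta> \<in> der D tA (fst x1) (tA \<beta>) (fst x2) \<and> cCmp T (tA \<beta>) (snd x2) = snd x1"
  by (auto simp add: plus_cat_def Let_def)
lemma pl_dom[simp]: "cDom (Pl X) (x1,\<beta>,x2) = x1" by (simp add: plus_cat_def Let_def)
lemma pl_cod[simp]: "cCod (Pl X) (x1,\<beta>,x2) = x2" by (simp add: plus_cat_def Let_def)
lemma pl_id[simp]: "cId (Pl X) x = (x, cId D (fst x), x)" by (simp add: plus_cat_def Let_def)
lemma pl_cmp[simp]: "cCmp (Pl X) (x1,\<beta>,x2) (y1,\<beta>',y2) = (x1, cCmp D \<beta> \<beta>', y2)" by (simp add: plus_cat_def Let_def)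

lemma mi_ob[simp]: "(y \<in> cOb BM) \<longleftrightarrow> fst y \<in> cAr T \<and> cDom T (fst y) = B \<and> snd y \<in> cOb D \<and> cCod T (fst y) = tO (snd y)"
  by (cases y) (simp add: minus_cat_def Let_def)
lemma mi_ar[simp]: "((y1,\<gamma>,y2) \<in> cAr BM) \<longleftrightarrow> y1 \<in> cOb BM \<and> y2 \<in> cOb BM \<and> \<gamma> \<in> der D tA (snd y1) (tA \<gamma>) (snd y2) \<and> cCmp T (fst y1) (tA \<gamma>) = fst y2"
  by (simp add: minus_cat_def Let_def)
lemma mi_dom[simp]: "cDom BM (y1,\<gamma>,y2) = y2" by (simp add: minus_cat_def Let_def)
lemma mi_cod[simp]: "cCod BM (y1,\<gamma>,y2) = y1" by (simp add: minus_cat_def Let_def)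

lemma psi_ob[simp]: "psh_ob \<psi> y = der D tA P (cCmp T c (fst y)) (snd y)"
  by (cases y) (simp add: pb_psh_def minus_psh_def cminus_ob_def)
lemma psi_ar[simp]: "psh_ar \<psi> (y1,\<gamma>,y2) a = cCmp D a \<gamma>"
  by (simp add: pb_psh_def minus_psh_def cminus_ar_def)
lemma dr_ob[simp]: "psh_ob (der_right D T tA x) y = der D tA (fst x) (cCmp T (snd x) (fst y)) (snd y)"
  by (simp add: der_right_def Der_ob_def bracket_def)
lemma dr_ar[simp]: "psh_ar (der_right D T tA x) (y1,\<gamma>,y2) v = cCmp D (cCmp D (cId D (fst x)) v) \<gamma>"
  by (simp add: der_right_def Der_ar_def)
lemma dl_ob[simp]: "psh_ob (der_left D T tA y) x = der D tA (fst x) (cCmp T (snd x) (fst y)) (snd y)"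
  by (simp add: der_left_def Der_ob_def bracket_def)
lemma dl_ar[simp]: "psh_ar (der_left D T tA y) (x1,\<beta>,x2) v = cCmp D (cCmp D \<beta> v) (cId D (snd y))"
  by (simp add: der_left_def Der_ar_def)
lemma pp_ob[simp]: "psh_ob (plus_psh D tA Q) x = der D tA (fst x) (snd x) Q"
  by (cases x) (simp add: plus_psh_def)
lemma pp_ar[simp]: "psh_ar (plus_psh D tA Q) (x1,\<beta>,x2) v = cCmp D \<beta> v"
  by (simp add: plus_psh_def)
lemma pL_ob[simp]: "psh_ob (perp_L D T tO tA B \<phi>) x = nat_trans BM \<phi> (der_right D T tA x)"
  by (simp add: perp_L_def)
lemma pL_ar[simp]: "psh_ar (perp_L D T tO tA B \<phi>) g \<theta> = (\<lambda>y a. if y \<in> cOb BM \<and> a \<in> psh_ob \<phi> y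
                            then psh_ar (der_left D T tA y) g (\<theta> y a) else undefined)"
  by (simp add: perp_L_def)
lemma pR_ob[simp]: "psh_ob (perp_R D T tO tA B \<phi>) y = nat_trans (Pl B) \<phi> (der_left D T tA y)"
  by (simp add: perp_R_def)
lemma pR_ar[simp]: "psh_ar (perp_R D T tO tA B \<phi>) g \<theta> = (\<lambda>x a. if x \<in> cOb (Pl B) \<and> a \<in> psh_ob \<phi> x
                            then psh_ar (der_right D T tA x) g (\<theta> x a) else undefined)"
  by (simp add: perp_R_def)

lemma ntD1: "\<theta> \<in> nat_trans C F G \<Longrightarrow> x \<in> cOb C \<Longrightarrow> a \<in> psh_ob F x \<Longrightarrow> \<theta> x a \<in> psh_ob G x"
  unfolding nat_trans_def by blast
lemma ntD2: "\<theta> \<in> nat_trans C F G \<Longrightarrow> g \<in> cAr C \<Longrightarrow> a \<in> psh_ob F (cCod C g) \<Longrightarrow>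
   \<theta> (cDom C g) (psh_ar F g a) = psh_ar G g (\<theta> (cCod C g) a)"
  unfolding nat_trans_def by blast
lemma ntD3: "\<theta> \<in> nat_trans C F G \<Longrightarrow> \<not> (x \<in> cOb C \<and> a \<in> psh_ob F x) \<Longrightarrow> \<theta> x a = undefined"
  unfolding nat_trans_def by blast

definition Ta :: "'tm \<times> 'do \<Rightarrow> 'dm \<Rightarrow> 'dm \<Rightarrow> 'dm" where
  "Ta y \<alpha> a = (if y \<in> cOb BM \<and> a \<in> der D tA P (cCmp T c (fst y)) (snd y)
                 then cCmp D \<alpha> (pfi (fst y) (snd y) a) else undefined)"

definition "Theta_a = (\<lambda>(x::'do\<times>'tm) \<alpha> y a. Ta y \<alpha> a)"

lemma y0_ob: "(cId T B, Pc) \<in> cOb BM"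
  using T_id[of B] pfD ccod T_ar[OF cAr] by auto

lemma cc_ar: "c \<in> cAr T" "cDom T c = tO P" "cCod T c = B" using cAr cdom ccod tOP by auto

lemma Ta_val: assumes "(d,R) \<in> cOb BM" "a \<in> der D tA P (cCmp T c d) R" "\<alpha> \<in> der D tA Q e Pc"
  shows "Ta (d,R) \<alpha> a \<in> der D tA Q (cCmp T e d) R"
proof -
  have "pfi d R a \<in> der D tA Pc d R" using pfi assms by simp
  then show ?thesis using assms der_comp by (simp add: Ta_def)
qed

lemma Ta_nat: assumes g: "((d1,R1),\<gamma>,(d2,R2)) \<in> cAr BM" and a: "a \<in> der D tA P (cCmp T c d1) R1"
    and al: "\<alpha> \<in> der D tA Q e Pc"
  shows "Ta (d2,R2) \<alpha> (cCmp D a \<gamma>) = cCmp D (cCmp D (cId D Q) (Ta (d1,R1) \<alpha> a)) \<gamma>"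
proof -
  from g have y1: "d1 \<in> cAr T" "cDom T d1 = B" "R1 \<in> cOb D" "cCod T d1 = tO R1"
    and y2: "d2 \<in> cAr T" "cDom T d2 = B" "R2 \<in> cOb D" "cCod T d2 = tO R2"
    and ga: "\<gamma> \<in> der D tA R1 (tA \<gamma>) R2" and d2: "d2 = cCmp T d1 (tA \<gamma>)" by auto
  define a1 where "a1 = pfi d1 R1 a"
  have a1: "a1 \<in> der D tA Pc d1 R1" "cCmp D \<kappa> a1 = a" using pfi[OF y1 a] a1_def by auto
  have ac: "cCmp D a1 \<gamma> \<in> der D tA Pc d2 R2" using der_comp[OF a1(1) ga] d2 by simp
  have "cCmp T (cCmp T c d1) (tA \<gamma>) = cCmp T c d2"
    using d2 T_assoc cc_ar y1 der_T[OF ga] by metis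
  then have ag: "cCmp D a \<gamma> \<in> der D tA P (cCmp T c d2) R2" using der_comp[OF a ga] by simp
  have "cCmp D a \<gamma> = cCmp D \<kappa> (cCmp D a1 \<gamma>)" using a1 der_assoc[OF pfD(3) a1(1) ga] by simp
  then have p2: "pfi d2 R2 (cCmp D a \<gamma>) = cCmp D a1 \<gamma>" using pfi_eq[OF y2 ac] by simp
  have lhs: "Ta (d2,R2) \<alpha> (cCmp D a \<gamma>) = cCmp D \<alpha> (cCmp D a1 \<gamma>)"
    using ag y2 p2 by (simp add: Ta_def)
  have "Ta (d1,R1) \<alpha> a = cCmp D \<alpha> a1" using y1 a by (simp add: Ta_def a1_def)
  moreover have "cCmp D \<alpha> a1 \<in> der D tA Q (cCmp T e d1) R1" using der_comp al a1 by blast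
  ultimately show ?thesis using lhs der_idl der_assoc[OF al a1(1) ga] by simp
qed

lemma trip: obtains d1 R1 \<gamma> d2 R2 where "g = ((d1,R1),\<gamma>,(d2,R2))"
  by (metis prod.collapse)

lemma Ta_in: assumes x: "x \<in> cOb (Pl B)" and al: "\<alpha> \<in> der D tA (fst x) (snd x) Pc"
  shows "(\<lambda>y a. Ta y \<alpha> a) \<in> nat_trans BM \<psi> (der_right D T tA x)"
  unfolding nat_trans_def
proof (intro CollectI conjI ballI allI impI)
  fix y a assume "y \<in> cOb BM" "a \<in> psh_ob \<psi> y"
  then show "Ta y \<alpha> a \<in> psh_ob (der_right D T tA x) y"
    using Ta_val[of "fst y" "snd y" a \<alpha> "fst x" "snd x"] al by simp
next
  fix g a assume g: "g \<in> cAr BM" and a: "a \<in> psh_ob \<psi> (cCod BM g)"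
  obtain d1 R1 \<gamma> d2 R2 where ge: "g = ((d1,R1),\<gamma>,(d2,R2))" by (rule trip)
  show "Ta (cDom BM g) \<alpha> (psh_ar \<psi> g a) = psh_ar (der_right D T tA x) g (Ta (cCod BM g) \<alpha> a)"
    using Ta_nat[of d1 R1 \<gamma> d2 R2 a \<alpha> "fst x" "snd x"] g a al ge by simp
next
  fix y a assume "y \<notin> cOb BM \<or> a \<notin> psh_ob \<psi> y"
  then show "Ta y \<alpha> a = undefined" by (auto simp: Ta_def)
qed

lemma id_Pc: "cId D Pc \<in> der D tA Pc (cId T B) Pc" using der_id[OF pfD(1)] pfD(2) by simp
lemma c_id: "cCmp T c (cId T B) = c" using T_idr' cc_ar by blast
lemma kappa_psi: "\<kappa> \<in> psh_ob \<psi> (cId T B, Pc)" using pfD(3) c_id by simp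

lemma inv_in_a: assumes x: "x \<in> cOb (Pl B)" and Ph: "\<Phi> \<in> nat_trans BM \<psi> (der_right D T tA x)"
  shows "\<Phi> (cId T B, Pc) \<kappa> \<in> der D tA (fst x) (snd x) Pc"
proof -
  have "\<Phi> (cId T B, Pc) \<kappa> \<in> der D tA (fst x) (cCmp T (snd x) (cId T B)) Pc"
    using ntD1[OF Ph y0_ob kappa_psi] by simp
  moreover have "cCmp T (snd x) (cId T B) = snd x" using x T_idr' by simp
  ultimately show ?thesis by simp
qed

lemma rt1_a: assumes x: "x \<in> cOb (Pl B)" and al: "\<alpha> \<in> der D tA (fst x) (snd x) Pc"
  shows "Ta (cId T B, Pc) \<alpha> \<kappa> = \<alpha>"
proof -
  have "pfi (cId T B) Pc \<kappa> = cId D Pc"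
    using pfi_eq[of "cId T B" Pc "cId D Pc"] y0_ob id_Pc der_idr[OF pfD(3)] by simp
  then show ?thesis using y0_ob kappa_psi der_idr[OF al] by (simp add: Ta_def)
qed

lemma rt2_a: assumes x: "x \<in> cOb (Pl B)" and Ph: "\<Phi> \<in> nat_trans BM \<psi> (der_right D T tA x)"
  shows "(\<lambda>y a. Ta y (\<Phi> (cId T B, Pc) \<kappa>) a) = \<Phi>"
proof (intro ext)
  fix y a
  show "Ta y (\<Phi> (cId T B, Pc) \<kappa>) a = \<Phi> y a"
  proof (cases "y \<in> cOb BM \<and> a \<in> psh_ob \<psi> y")
    case False then show ?thesis using ntD3[OF Ph False] by (auto simp: Ta_def)
  next
    case True
    obtain d R where y: "y = (d,R)" by (cases y)
    have yo: "d\<in>cAr T" "cDom T d = B" "R\<in>cOb D" "cCod T d = tO R" using True y by auto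
    have a: "a \<in> der D tA P (cCmp T c d) R" using True y by simp
    define a1 where "a1 = pfi d R a"
    have a1: "a1 \<in> der D tA Pc d R" "cCmp D \<kappa> a1 = a" using pfi[OF yo a] a1_def by auto
    have g: "((cId T B, Pc), a1, (d,R)) \<in> cAr BM"
      using y0_ob True y a1(1) T_idl'[of d B] yo by (auto simp: der_iff)
    have "\<Phi> (d,R) (cCmp D \<kappa> a1) = cCmp D (cCmp D (cId D (fst x)) (\<Phi> (cId T B, Pc) \<kappa>)) a1"
      using ntD2[OF Ph g] kappa_psi by simp
    moreover have "cCmp D (cId D (fst x)) (\<Phi> (cId T B, Pc) \<kappa>) = \<Phi> (cId T B, Pc) \<kappa>"
      using der_idl[OF inv_in_a[OF x Ph]] .
    ultimately show ?thesis using True y a1 by (simp add: Ta_def a1_def)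
  qed
qed

lemma Ta_natB: assumes g: "((Q1,e1),\<beta>,(Q2,e2)) \<in> cAr (Pl B)" and al: "\<alpha> \<in> der D tA Q2 e2 Pc"
   and y: "y \<in> cOb BM" and a: "a \<in> psh_ob \<psi> y"
  shows "Ta y (cCmp D \<beta> \<alpha>) a = cCmp D (cCmp D \<beta> (Ta y \<alpha> a)) (cId D (snd y))"
proof -
  obtain d R where ye: "y = (d,R)" by (cases y)
  have yo: "d\<in>cAr T" "cDom T d = B" "R\<in>cOb D" "cCod T d = tO R" using y ye by auto
  have a': "a \<in> der D tA P (cCmp T c d) R" using a ye by simp
  have a1: "pfi d R a \<in> der D tA Pc d R" using pfi[OF yo a'] by auto
  have b: "\<beta> \<in> der D tA Q1 (tA \<beta>) Q2" using g by simp
  have "cCmp D \<beta> (cCmp D \<alpha> (pfi d R a)) \<in> der D tA Q1 (cCmp T (tA \<beta>) (cCmp T e2 d)) R"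
    using der_comp[OF b der_comp[OF al a1]] .
  then show ?thesis using y a ye der_assoc[OF b al a1] der_idr by (simp add: Ta_def)
qed

lemma part_a: "nat_iso (Pl B) (plus_psh D tA Pc) (perp_L D T tO tA B \<psi>)"
  unfolding nat_iso_def
proof (intro exI[of _ Theta_a] conjI ballI)
  fix x assume x: "x \<in> cOb (Pl B)"
  show "bij_betw (Theta_a x) (psh_ob (plus_psh D tA Pc) x) (psh_ob (perp_L D T tO tA B \<psi>) x)"
    unfolding Theta_a_def
    apply (rule bij_betw_byWitness[where f'="\<lambda>\<Phi>. \<Phi> (cId T B, Pc) \<kappa>"])
    using rt1_a[OF x] rt2_a[OF x] Ta_in[OF x] inv_in_a[OF x] by auto
next
  fix g a assume g: "g \<in> cAr (Pl B)" and a: "a \<in> psh_ob (plus_psh D tA Pc) (cCod (Pl B) g)"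
  obtain Q1 e1 \<beta> Q2 e2 where ge: "g = ((Q1,e1),\<beta>,(Q2,e2))" by (rule trip)
  show "Theta_a (cDom (Pl B) g) (psh_ar (plus_psh D tA Pc) g a) =
         psh_ar (perp_L D T tO tA B \<psi>) g (Theta_a (cCod (Pl B) g) a)"
  proof -
    have "Ta y (cCmp D \<beta> a) a' = (if y \<in> cOb BM \<and> a' \<in> psh_ob \<psi> y
       then psh_ar (der_left D T tA y) g (Ta y a a') else undefined)" for y a'
    proof (cases "y \<in> cOb BM \<and> a' \<in> psh_ob \<psi> y")
      case True
      have gg: "((Q1,e1),\<beta>,(Q2,e2)) \<in> cAr (Pl B)" using g unfolding ge .
      have a'': "a \<in> der D tA Q2 e2 Pc" using a ge by simp
      from True have y: "y \<in> cOb BM" and a2: "a' \<in> psh_ob \<psi> y" by auto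
      show ?thesis unfolding if_P[OF True] ge dl_ar using Ta_natB[OF gg a'' y a2] .
    next
      case False then show ?thesis unfolding Ta_def by auto
    qed
    note eq = this[unfolded ge]
    show ?thesis unfolding Theta_a_def ge pl_dom pl_cod pp_ar pL_ar by (intro ext) (rule eq)
  qed
qed

abbreviation "\<chi> \<equiv> plus_psh D tA P"
abbreviation "Cr \<equiv> lan_carrier (Pl A) (Pl B) (cplus_ob T c) \<chi>"
abbreviation "Gn \<equiv> lan_gen (Pl A) (Pl B) (cplus_ob T c) (cplus_ar T c) \<chi>"
abbreviation "Eq \<equiv> lan_equiv (Pl A) (Pl B) (cplus_ob T c) (cplus_ar T c) \<chi>"
abbreviation "Ln \<equiv> lan_psh (Pl A) (Pl B) (cplus_ob T c) (cplus_ar T c) \<chi>"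

lemma cpo[simp]: "cplus_ob T c (Q,e) = (Q, cCmp T e c)" by (simp add: cplus_ob_def)
lemma cpa[simp]: "cplus_ar T c (x1,\<beta>,x2) = (cplus_ob T c x1, \<beta>, cplus_ob T c x2)" by (simp add: cplus_ar_def)

lemma Ln_ob[simp]: "psh_ob Ln y = Cr y // Eq y" by (simp add: lan_psh_def)
lemma Ln_ar[simp]: "psh_ar Ln k u = Eq (cDom (Pl B) k) `` ((\<lambda>(x, f, a). (x, cCmp (Pl B) k f, a)) ` u)"
  by (simp add: lan_psh_def)

lemma Cr_iff: "((x0,f,a) \<in> Cr y) \<longleftrightarrow> x0 \<in> cOb (Pl A) \<and> f \<in> cAr (Pl B) \<and> cDom (Pl B) f = y
   \<and> cCod (Pl B) f = cplus_ob T c x0 \<and> a \<in> der D tA (fst x0) (snd x0) P"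
  by (cases x0) (simp add: lan_carrier_def plus_psh_def)

lemma Gn_iff: "(p \<in> Gn y) \<longleftrightarrow> (\<exists>g f a'. p = ((cDom (Pl A) g, f, psh_ar \<chi> g a'), (cCod (Pl A) g, cCmp (Pl B) f (cplus_ar T c g), a'))
   \<and> g \<in> cAr (Pl A) \<and> f \<in> cAr (Pl B) \<and> cDom (Pl B) f = y \<and> cCod (Pl B) f = cplus_ob T c (cDom (Pl A) g)
   \<and> a' \<in> psh_ob \<chi> (cCod (Pl A) g))"
  unfolding lan_gen_def by blast

lemma Eq_def': "Eq y = Id_on (Cr y) \<union> (Gn y \<union> (Gn y)\<inverse>)\<^sup>+" by (simp add: lan_equiv_def)

lemma pl_comp: assumes "(x1,\<beta>,x2) \<in> cAr (Pl X)" "(x2,\<beta>',x3) \<in> cAr (Pl X)"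
  shows "(x1, cCmp D \<beta> \<beta>', x3) \<in> cAr (Pl X)"
proof -
  have b: "\<beta> \<in> der D tA (fst x1) (tA \<beta>) (fst x2)" "\<beta>' \<in> der D tA (fst x2) (tA \<beta>') (fst x3)"
    and e: "snd x1 = cCmp T (tA \<beta>) (snd x2)" "snd x2 = cCmp T (tA \<beta>') (snd x3)"
    and o: "x1 \<in> cOb (Pl X)" "x2 \<in> cOb (Pl X)" "x3 \<in> cOb (Pl X)" using assms by auto
  have bb: "cCmp D \<beta> \<beta>' \<in> der D tA (fst x1) (cCmp T (tA \<beta>) (tA \<beta>')) (fst x3)" using der_comp[OF b] .
  then have tb: "tA (cCmp D \<beta> \<beta>') = cCmp T (tA \<beta>) (tA \<beta>')" by (simp add: der_iff)
  have "snd x1 = cCmp T (cCmp T (tA \<beta>) (tA \<beta>')) (snd x3)"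
    using e T_assoc der_T[OF b(1)] der_T[OF b(2)] o by auto
  then show ?thesis using o bb tb by simp
qed

lemma cpa_ar: assumes "g \<in> cAr (Pl A)" shows "cplus_ar T c g \<in> cAr (Pl B)"
proof -
  obtain Q1 e1 \<beta> Q2 e2 where ge: "g = ((Q1,e1),\<beta>,(Q2,e2))" by (rule trip)
  have o: "Q1 \<in> cOb D" "e1 \<in> cAr T" "cDom T e1 = tO Q1" "cCod T e1 = A"
          "Q2 \<in> cOb D" "e2 \<in> cAr T" "cDom T e2 = tO Q2" "cCod T e2 = A"
      and b: "\<beta> \<in> der D tA Q1 (tA \<beta>) Q2" and e: "e1 = cCmp T (tA \<beta>) e2" using assms ge by auto
  have eq: "cCmp T e1 c = cCmp T (tA \<beta>) (cCmp T e2 c)" using e T_assoc der_T[OF b] o cc_ar tOP by auto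
  have o1: "(Q1, cCmp T e1 c) \<in> cOb (Pl B)" using T_cmp[of e1 c] o cc_ar tOP by auto
  have o2: "(Q2, cCmp T e2 c) \<in> cOb (Pl B)" using T_cmp[of e2 c] o cc_ar tOP by auto
  have "((Q1, cCmp T e1 c), \<beta>, (Q2, cCmp T e2 c)) \<in> cAr (Pl B)"
    unfolding pl_ar using o1 o2 b eq by auto
  then show ?thesis using ge by simp
qed

lemma Gn_sub: "Gn y \<subseteq> Cr y \<times> Cr y"
proof
  fix p assume "p \<in> Gn y"
  then obtain g f a' where p: "p = ((cDom (Pl A) g, f, psh_ar \<chi> g a'), (cCod (Pl A) g, cCmp (Pl B) f (cplus_ar T c g), a'))"
    and g: "g \<in> cAr (Pl A)" and f: "f \<in> cAr (Pl B)" "cDom (Pl B) f = y" "cCod (Pl B) f = cplus_ob T c (cDom (Pl A) g)"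
    and a: "a' \<in> psh_ob \<chi> (cCod (Pl A) g)" unfolding Gn_iff by blast
  obtain Q1 e1 \<beta> Q2 e2 where ge: "g = ((Q1,e1),\<beta>,(Q2,e2))" by (rule trip)
  obtain z1 f\<beta> z2 where fe: "f = (z1,f\<beta>,z2)" by (metis prod.collapse)
  have b: "\<beta> \<in> der D tA Q1 (tA \<beta>) Q2" and e: "e1 = cCmp T (tA \<beta>) e2" using g ge by auto
  have a': "a' \<in> der D tA Q2 e2 P" using a ge by simp
  have ba: "cCmp D \<beta> a' \<in> der D tA Q1 e1 P" using der_comp[OF b a'] e by simp
  have cg: "cplus_ar T c g \<in> cAr (Pl B)" using cpa_ar g .
  have z2: "z2 = (Q1, cCmp T e1 c)" using f(3) fe ge by simp
  have f': "(z1,f\<beta>,(Q1, cCmp T e1 c)) \<in> cAr (Pl B)" using f(1) fe z2 by auto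
  have cg': "((Q1, cCmp T e1 c),\<beta>,(Q2, cCmp T e2 c)) \<in> cAr (Pl B)" using cg unfolding ge cpa cpo .
  have fc: "(z1, cCmp D f\<beta> \<beta>, (Q2, cCmp T e2 c)) \<in> cAr (Pl B)" using pl_comp[OF f' cg'] .
  have o1: "(Q1,e1) \<in> cOb (Pl A)" "(Q2,e2) \<in> cOb (Pl A)" using g ge by (simp only: pl_ar)+
  have m1: "((Q1,e1), f, cCmp D \<beta> a') \<in> Cr y" unfolding Cr_iff using o1 f ba z2 ge by simp
  have m2: "((Q2,e2), (z1, cCmp D f\<beta> \<beta>, (Q2, cCmp T e2 c)), a') \<in> Cr y"
    unfolding Cr_iff using o1 fc a' f(2) fe by simp
  show "p \<in> Cr y \<times> Cr y" using p ge fe m1 m2 by simp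
qed

lemma Eq_equiv: "equiv (Cr y) (Eq y)" unfolding Eq_def' using gen_equiv[OF Gn_sub] .

definition mk :: "('do \<times> 'tm) \<times> 'dm \<times> ('do \<times> 'tm) \<Rightarrow> ('do \<times> 'tm) \<times> (('do \<times> 'tm) \<times> 'dm \<times> ('do \<times> 'tm)) \<times> 'dm
   \<Rightarrow> ('do \<times> 'tm) \<times> (('do \<times> 'tm) \<times> 'dm \<times> ('do \<times> 'tm)) \<times> 'dm" where
  "mk k = (\<lambda>(x, f, a). (x, cCmp (Pl B) k f, a))"

lemma mk_simp[simp]: "mk k (x,f,a) = (x, cCmp (Pl B) k f, a)" by (simp add: mk_def)

lemma pl_dom_ar: "f \<in> cAr (Pl X) \<Longrightarrow> \<exists>f\<beta> z. f = (cDom (Pl X) f, f\<beta>, z)"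
  by (metis pl_dom prod.collapse)

lemma mk_Cr: assumes k: "(x1,k\<beta>,x2) \<in> cAr (Pl B)" and t: "t \<in> Cr x2"
  shows "mk (x1,k\<beta>,x2) t \<in> Cr x1"
proof -
  obtain x0 f a where te: "t = (x0,f,a)" by (metis prod.collapse)
  have f: "f \<in> cAr (Pl B)" "cDom (Pl B) f = x2" "cCod (Pl B) f = cplus_ob T c x0" and
    r: "x0 \<in> cOb (Pl A)" "a \<in> der D tA (fst x0) (snd x0) P" using t te Cr_iff by auto
  obtain f\<beta> z where fe: "f = (x2,f\<beta>,z)" using pl_dom_ar[OF f(1)] f(2) by metis
  have f': "(x2,f\<beta>,z) \<in> cAr (Pl B)" using f(1) unfolding fe .
  have "(x1, cCmp D k\<beta> f\<beta>, z) \<in> cAr (Pl B)" using pl_comp[OF k f'] .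
  then show ?thesis using te fe f r by (simp add: Cr_iff)
qed

lemma pl_ar_parts: "(x1,\<beta>,x2) \<in> cAr (Pl X) \<Longrightarrow> \<beta> \<in> der D tA (fst x1) (tA \<beta>) (fst x2)" by simp

lemma mk_Gn: assumes k: "(x1,k\<beta>,x2) \<in> cAr (Pl B)" and p: "(t,t') \<in> Gn x2"
  shows "(mk (x1,k\<beta>,x2) t, mk (x1,k\<beta>,x2) t') \<in> Gn x1"
proof -
  obtain g f a' where pe: "(t,t') = ((cDom (Pl A) g, f, psh_ar \<chi> g a'), (cCod (Pl A) g, cCmp (Pl B) f (cplus_ar T c g), a'))"
    and g: "g \<in> cAr (Pl A)" and f: "f \<in> cAr (Pl B)" "cDom (Pl B) f = x2" "cCod (Pl B) f = cplus_ob T c (cDom (Pl A) g)"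
    and a: "a' \<in> psh_ob \<chi> (cCod (Pl A) g)" using p unfolding Gn_iff by blast
  obtain Q1 e1 \<beta> Q2 e2 where ge: "g = ((Q1,e1),\<beta>,(Q2,e2))" by (rule trip)
  obtain f\<beta> z where fe: "f = (x2,f\<beta>,z)" using pl_dom_ar[OF f(1)] f(2) by metis
  have f': "(x2,f\<beta>,z) \<in> cAr (Pl B)" using f(1) unfolding fe .
  have z: "z = (Q1, cCmp T e1 c)" using f(3) fe ge by simp
  have kf: "(x1, cCmp D k\<beta> f\<beta>, z) \<in> cAr (Pl B)" using pl_comp[OF k f'] .
  have b1: "k\<beta> \<in> der D tA (fst x1) (tA k\<beta>) (fst x2)" using k by simp
  have b2: "f\<beta> \<in> der D tA (fst x2) (tA f\<beta>) Q1" using f(1) fe z by simp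
  have b3: "\<beta> \<in> der D tA Q1 (tA \<beta>) Q2" using g ge by simp
  have as: "cCmp D (cCmp D k\<beta> f\<beta>) \<beta> = cCmp D k\<beta> (cCmp D f\<beta> \<beta>)" using der_assoc[OF b1 b2 b3] .
  have "(mk (x1,k\<beta>,x2) t, mk (x1,k\<beta>,x2) t') = ((cDom (Pl A) g, (x1, cCmp D k\<beta> f\<beta>, z), psh_ar \<chi> g a'),
          (cCod (Pl A) g, cCmp (Pl B) (x1, cCmp D k\<beta> f\<beta>, z) (cplus_ar T c g), a'))"
    using pe fe ge as by simp
  moreover have zz: "z = cplus_ob T c (cDom (Pl A) g)" using f(3) fe by simp
  moreover have "cDom (Pl B) (x1, cCmp D k\<beta> f\<beta>, z) = x1" "cCod (Pl B) (x1, cCmp D k\<beta> f\<beta>, z) = z" by simp_all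
  ultimately show ?thesis unfolding Gn_iff using g kf a by blast
qed

lemma mk_Eq: assumes k: "(x1,k\<beta>,x2) \<in> cAr (Pl B)" and p: "(t,t') \<in> Eq x2"
  shows "(mk (x1,k\<beta>,x2) t, mk (x1,k\<beta>,x2) t') \<in> Eq x1"
  unfolding Eq_def' by (rule gen_map[OF mk_Gn[OF k] mk_Cr[OF k] p[unfolded Eq_def']])

lemma Ln_ar_class: assumes k: "(x1,k\<beta>,x2) \<in> cAr (Pl B)" and t: "t \<in> Cr x2"
  shows "psh_ar Ln (x1,k\<beta>,x2) (Eq x2 `` {t}) = Eq x1 `` {mk (x1,k\<beta>,x2) t}"
proof -
  have e1: "equiv (Cr x1) (Eq x1)" and e2: "equiv (Cr x2) (Eq x2)" by (rule Eq_equiv)+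
  have tt: "(t,t) \<in> Eq x2" using e2 t unfolding equiv_def refl_on_def by blast
  have l: "(\<lambda>(x, f, a). (x, cCmp (Pl B) (x1,k\<beta>,x2) f, a)) = mk (x1,k\<beta>,x2)" by (simp add: mk_def)
  show ?thesis unfolding Ln_ar l pl_dom
  proof (intro equalityI subsetI)
    fix z assume "z \<in> Eq x1 `` (mk (x1,k\<beta>,x2) ` (Eq x2 `` {t}))"
    then obtain s where s: "(t,s) \<in> Eq x2" "(mk (x1,k\<beta>,x2) s, z) \<in> Eq x1" by blast
    have "(mk (x1,k\<beta>,x2) t, mk (x1,k\<beta>,x2) s) \<in> Eq x1" using mk_Eq[OF k s(1)] .
    then show "z \<in> Eq x1 `` {mk (x1,k\<beta>,x2) t}" using s(2) e1 unfolding equiv_def trans_def by blast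
  next
    fix z assume "z \<in> Eq x1 `` {mk (x1,k\<beta>,x2) t}"
    then show "z \<in> Eq x1 `` (mk (x1,k\<beta>,x2) ` (Eq x2 `` {t}))" using tt by blast
  qed
qed

definition h0 :: "('do \<times> 'tm) \<times> (('do \<times> 'tm) \<times> 'dm \<times> ('do \<times> 'tm)) \<times> 'dm \<Rightarrow> 'dm" where
  "h0 t = (case t of (x0, f, a0) \<Rightarrow> cCmp D (cCmp D (fst (snd f)) a0) \<kappa>)"

lemma h0_simp[simp]: "h0 (x0, (z1,f\<beta>,z2), a0) = cCmp D (cCmp D f\<beta> a0) \<kappa>" by (simp add: h0_def)

lemma Cr_dest: assumes "t \<in> Cr y"
  obtains x0 f\<beta> a0 where "t = (x0, (y, f\<beta>, cplus_ob T c x0), a0)" "x0 \<in> cOb (Pl A)"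
    "(y, f\<beta>, cplus_ob T c x0) \<in> cAr (Pl B)" "a0 \<in> der D tA (fst x0) (snd x0) P"
proof -
  obtain x0 f a where te: "t = (x0,f,a)" by (metis prod.collapse)
  have f: "f \<in> cAr (Pl B)" "cDom (Pl B) f = y" "cCod (Pl B) f = cplus_ob T c x0" and
    r: "x0 \<in> cOb (Pl A)" "a \<in> der D tA (fst x0) (snd x0) P" using assms te Cr_iff by auto
  obtain f\<beta> z where fe: "f = (y,f\<beta>,z)" using pl_dom_ar[OF f(1)] f(2) by metis
  have "z = cplus_ob T c x0" using f(3) fe by simp
  then show ?thesis using that te fe f r by blast
qed

lemma Cr_facts: assumes "(y, f\<beta>, cplus_ob T c x0) \<in> cAr (Pl B)" "x0 \<in> cOb (Pl A)"
   "a0 \<in> der D tA (fst x0) (snd x0) P"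
  shows "f\<beta> \<in> der D tA (fst y) (tA f\<beta>) (fst x0)" "cCmp T (tA f\<beta>) (cCmp T (snd x0) c) = snd y"
    "cCmp D f\<beta> a0 \<in> der D tA (fst y) (cCmp T (tA f\<beta>) (snd x0)) P"
    "cCmp T (cCmp T (tA f\<beta>) (snd x0)) c = snd y"
proof -
  obtain Q0 e0 where x0: "x0 = (Q0,e0)" by (cases x0)
  have o: "Q0 \<in> cOb D" "e0 \<in> cAr T" "cDom T e0 = tO Q0" "cCod T e0 = A" using assms(2) x0 by auto
  show f1: "f\<beta> \<in> der D tA (fst y) (tA f\<beta>) (fst x0)" using assms(1) x0 by simp
  show f2: "cCmp T (tA f\<beta>) (cCmp T (snd x0) c) = snd y" using assms(1) x0 by simp
  show "cCmp D f\<beta> a0 \<in> der D tA (fst y) (cCmp T (tA f\<beta>) (snd x0)) P" using der_comp[OF f1 assms(3)] .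
  show "cCmp T (cCmp T (tA f\<beta>) (snd x0)) c = snd y"
    using f2 T_assoc der_T[OF f1] o x0 cc_ar tOP by auto
qed

lemma h0_val: assumes "t \<in> Cr y" shows "h0 t \<in> der D tA (fst y) (snd y) Pc"
proof -
  obtain x0 f\<beta> a0 where t: "t = (x0, (y, f\<beta>, cplus_ob T c x0), a0)" "x0 \<in> cOb (Pl A)"
    "(y, f\<beta>, cplus_ob T c x0) \<in> cAr (Pl B)" "a0 \<in> der D tA (fst x0) (snd x0) P"
    using Cr_dest[OF assms] by metis
  show ?thesis using der_comp[OF Cr_facts(3)[OF t(3,2,4)] pfD(3)] Cr_facts(4)[OF t(3,2,4)] t(1) by simp
qed

lemma h0_Gn: assumes "(t,t') \<in> Gn y" shows "h0 t = h0 t'"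
proof -
  obtain g f a' where pe: "(t,t') = ((cDom (Pl A) g, f, psh_ar \<chi> g a'), (cCod (Pl A) g, cCmp (Pl B) f (cplus_ar T c g), a'))"
    and g: "g \<in> cAr (Pl A)" and f: "f \<in> cAr (Pl B)" "cDom (Pl B) f = y" "cCod (Pl B) f = cplus_ob T c (cDom (Pl A) g)"
    and a: "a' \<in> psh_ob \<chi> (cCod (Pl A) g)" using assms unfolding Gn_iff by blast
  obtain Q1 e1 \<beta> Q2 e2 where ge: "g = ((Q1,e1),\<beta>,(Q2,e2))" by (rule trip)
  obtain f\<beta> z where fe: "f = (y,f\<beta>,z)" using pl_dom_ar[OF f(1)] f(2) by metis
  have z: "z = (Q1, cCmp T e1 c)" using f(3) fe ge by simp
  have b2: "f\<beta> \<in> der D tA (fst y) (tA f\<beta>) Q1" using f(1) fe z by simp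
  have b3: "\<beta> \<in> der D tA Q1 (tA \<beta>) Q2" using g ge by simp
  have a': "a' \<in> der D tA Q2 e2 P" using a ge by simp
  show ?thesis using pe fe ge der_assoc[OF b2 b3 a'] by simp
qed

definition th0 where
  "th0 x u = (if x \<in> cOb (Pl B) \<and> u \<in> Cr x // Eq x then h0 (SOME t. t \<in> u) else undefined)"

lemma th0_class: assumes "x \<in> cOb (Pl B)" "t \<in> Cr x" shows "th0 x (Eq x `` {t}) = h0 t"
proof -
  have e: "equiv (Cr x) (Eq x)" by (rule Eq_equiv)
  have q: "Eq x `` {t} \<in> Cr x // Eq x" using assms(2) by (rule quotientI)
  have tt: "t \<in> Eq x `` {t}" using e assms(2) unfolding equiv_def refl_on_def by blast
  then have "(SOME s. s \<in> Eq x `` {t}) \<in> Eq x `` {t}" by (rule someI)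
  then have "(t, SOME s. s \<in> Eq x `` {t}) \<in> Eq x" by simp
  then have r: "(t, SOME s. s \<in> Eq x `` {t}) \<in> Id_on (Cr x) \<union> (Gn x \<union> (Gn x)\<inverse>)\<^sup>+"
    unfolding Eq_def' .
  have "h0 t = h0 (SOME s. s \<in> Eq x `` {t})" by (rule gen_resp[OF h0_Gn r])
  then show ?thesis using assms q by (simp add: th0_def)
qed

lemma class_in: assumes "u \<in> Cr x // Eq x" obtains t where "t \<in> Cr x" "u = Eq x `` {t}"
  using assms by (auto elim: quotientE)

lemma arr_split: obtains x1 k\<beta> x2 where "k = (x1,k\<beta>,x2)" by (metis prod.collapse)

lemma PcB: "(P,c) \<in> cOb (Pl B)" using PO cc_ar by simp
lemma PidA: "(P, cId T A) \<in> cOb (Pl A)" using PO T_id[of A] cc_ar T_ar[OF cAr] cdom tOP by auto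
lemma idPA: "cId D P \<in> der D tA P (cId T A) P" using der_id[OF PO] tOP by simp
lemma idA_c: "cCmp T (cId T A) c = c" using T_idl' cc_ar cdom by blast

definition "t0 = ((P, cId T A), ((P,c), cId D P, (P,c)), cId D P)"
definition "u0 = Eq (P,c) `` {t0}"

lemma t0_Cr: "t0 \<in> Cr (P,c)"
proof -
  have "((P,c), cId D P, (P,c)) \<in> cAr (Pl B)" using PcB idPA idA_c F_id[OF PO] tOP by simp
  then show ?thesis unfolding t0_def Cr_iff using PidA idPA idA_c by simp
qed

lemma u0_in: "u0 \<in> psh_ob Ln (P,c)" unfolding u0_def Ln_ob using t0_Cr by (rule quotientI)

lemma th0_u0: "th0 (P,c) u0 = \<kappa>"
  unfolding u0_def using th0_class[OF PcB t0_Cr] der_idl[OF idPA] der_idl[OF pfD(3)]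
  by (simp add: t0_def)

abbreviation "y0 \<equiv> (cId T B, Pc)"

lemma h0_mk: assumes k: "(x1,k\<beta>,x2) \<in> cAr (Pl B)" and t: "t \<in> Cr x2"
  shows "h0 (mk (x1,k\<beta>,x2) t) = cCmp D k\<beta> (h0 t)"
proof -
  obtain x0 f\<beta> a0 where te: "t = (x0, (x2, f\<beta>, cplus_ob T c x0), a0)" "x0 \<in> cOb (Pl A)"
    "(x2, f\<beta>, cplus_ob T c x0) \<in> cAr (Pl B)" "a0 \<in> der D tA (fst x0) (snd x0) P"
    using Cr_dest[OF t] by metis
  have b1: "k\<beta> \<in> der D tA (fst x1) (tA k\<beta>) (fst x2)" using k by simp
  note f = Cr_facts[OF te(3,2,4)]
  have "cCmp D (cCmp D (cCmp D k\<beta> f\<beta>) a0) \<kappa> = cCmp D (cCmp D k\<beta> (cCmp D f\<beta> a0)) \<kappa>"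
    using der_assoc[OF b1 f(1) te(4)] by simp
  also have "\<dots> = cCmp D k\<beta> (cCmp D (cCmp D f\<beta> a0) \<kappa>)" using der_assoc[OF b1 f(3) pfD(3)] .
  finally show ?thesis using te by simp
qed

lemma th0_in: "th0 \<in> nat_trans (Pl B) Ln (der_left D T tA y0)"
  unfolding nat_trans_def
proof (intro CollectI conjI ballI allI impI)
  fix x u assume x: "x \<in> cOb (Pl B)" and u: "u \<in> psh_ob Ln x"
  obtain t where t: "t \<in> Cr x" "u = Eq x `` {t}" using u by (auto elim: class_in)
  have "cCmp T (snd x) (cId T B) = snd x" using x T_idr' by simp
  then show "th0 x u \<in> psh_ob (der_left D T tA y0) x" using th0_class[OF x t(1)] t h0_val[OF t(1)] by simp
next
  fix k u assume k: "k \<in> cAr (Pl B)" and u: "u \<in> psh_ob Ln (cCod (Pl B) k)"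
  obtain x1 k\<beta> x2 where ke: "k = (x1,k\<beta>,x2)" by (rule arr_split)
  have k': "(x1,k\<beta>,x2) \<in> cAr (Pl B)" using k ke by simp
  have xo: "x1 \<in> cOb (Pl B)" "x2 \<in> cOb (Pl B)" using k' by (simp only: pl_ar)+
  obtain t where t: "t \<in> Cr x2" "u = Eq x2 `` {t}" using u ke by (auto elim: class_in)
  have b1: "k\<beta> \<in> der D tA (fst x1) (tA k\<beta>) (fst x2)" using k' by simp
  have "th0 x1 (psh_ar Ln k u) = h0 (mk (x1,k\<beta>,x2) t)"
    using Ln_ar_class[OF k' t(1)] th0_class[OF xo(1) mk_Cr[OF k' t(1)]] ke t by simp
  also have "\<dots> = cCmp D k\<beta> (h0 t)" using h0_mk[OF k' t(1)] .
  also have "\<dots> = cCmp D (cCmp D k\<beta> (h0 t)) (cId D Pc)"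
    using der_idr[OF der_comp[OF b1 h0_val[OF t(1)]]] by simp
  finally show "th0 (cDom (Pl B) k) (psh_ar Ln k u) = psh_ar (der_left D T tA y0) k (th0 (cCod (Pl B) k) u)"
    using ke t th0_class[OF xo(2) t(1)] by simp
next
  fix x u assume "x \<notin> cOb (Pl B) \<or> u \<notin> psh_ob Ln x"
  then show "th0 x u = undefined" by (auto simp: th0_def)
qed

lemma key: assumes \<theta>: "\<theta> \<in> nat_trans (Pl B) Ln (der_left D T tA y)" and y: "y \<in> cOb BM"
  and x: "x \<in> cOb (Pl B)" and t: "t = (x0, (x, f\<beta>, cplus_ob T c x0), a0)" "x0 \<in> cOb (Pl A)"
    "(x, f\<beta>, cplus_ob T c x0) \<in> cAr (Pl B)" "a0 \<in> der D tA (fst x0) (snd x0) P"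
  shows "\<theta> x (Eq x `` {t}) = cCmp D (cCmp D f\<beta> a0) (\<theta> (P,c) u0)"
proof -
  note f = Cr_facts[OF t(3,2,4)]
  have tf: "tA (cCmp D f\<beta> a0) = cCmp T (tA f\<beta>) (snd x0)" using f(3) by (simp add: der_iff)
  define k where "k = (x, cCmp D f\<beta> a0, (P,c))"
  have k: "(x, cCmp D f\<beta> a0, (P,c)) \<in> cAr (Pl B)"
    unfolding pl_ar using x PcB f(3) f(4) tf by simp
  have tC: "t \<in> Cr x" using t by (simp add: Cr_iff)
  obtain Q0 e0 where x0: "x0 = (Q0,e0)" by (cases x0)
  have o: "Q0 \<in> cOb D" "e0 \<in> cAr T" "cDom T e0 = tO Q0" "cCod T e0 = A" using t(2) x0 by auto
  define g0 where "g0 = (x0, a0, (P, cId T A))"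
  have ta0: "tA a0 = e0" using t(4) x0 by (simp add: der_iff)
  have g0: "g0 \<in> cAr (Pl A)" unfolding g0_def pl_ar using t(2) PidA t(4) ta0 x0 T_idr'[of e0 A] o by simp
  have cpP: "cplus_ob T c (P, cId T A) = (P,c)" using idA_c by simp
  have a0i: "cCmp D a0 (cId D P) = a0" using der_idr[OF t(4)] .
  have fai: "cCmp D (cCmp D f\<beta> a0) (cId D P) = cCmp D f\<beta> a0" using der_idr[OF f(3)] .
  have "(t, mk (x, cCmp D f\<beta> a0, (P,c)) t0) \<in> Gn x"
    unfolding Gn_iff
    apply (rule exI[of _ g0], rule exI[of _ "(x, f\<beta>, cplus_ob T c x0)"], rule exI[of _ "cId D P"])
    using t g0 idPA cpP a0i fai by (simp add: g0_def t0_def)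
  then have "(t, mk (x, cCmp D f\<beta> a0, (P,c)) t0) \<in> Eq x" unfolding Eq_def' by blast
  then have cl: "Eq x `` {t} = Eq x `` {mk (x, cCmp D f\<beta> a0, (P,c)) t0}"
    by (rule equiv_class_eq[OF Eq_equiv])
  have "\<theta> x (psh_ar Ln k u0) = psh_ar (der_left D T tA y) k (\<theta> (P,c) u0)"
    using ntD2[OF \<theta>, of k u0] k u0_in unfolding k_def by simp
  moreover have "psh_ar Ln k u0 = Eq x `` {t}" unfolding k_def u0_def Ln_ar_class[OF k t0_Cr] cl ..
  moreover have tv: "\<theta> (P,c) u0 \<in> der D tA P (cCmp T c (fst y)) (snd y)"
    using ntD1[OF \<theta> PcB u0_in] by simp
  moreover note der_idr[OF der_comp[OF f(3) tv]]
  ultimately show ?thesis unfolding k_def by simp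
qed

lemma pR_close: assumes g: "(y1,\<gamma>,y2) \<in> cAr BM" and \<theta>: "\<theta> \<in> nat_trans (Pl B) Ln (der_left D T tA y1)"
  shows "psh_ar (perp_R D T tO tA B Ln) (y1,\<gamma>,y2) \<theta> \<in> nat_trans (Pl B) Ln (der_left D T tA y2)"
proof -
  have yo: "y1 \<in> cOb BM" "y2 \<in> cOb BM" and ga: "\<gamma> \<in> der D tA (snd y1) (tA \<gamma>) (snd y2)"
    and e: "cCmp T (fst y1) (tA \<gamma>) = fst y2" using g by auto
  have val: "cCmp D (cCmp D (cId D (fst x)) (\<theta> x u)) \<gamma> = cCmp D (\<theta> x u) \<gamma> \<and>
      cCmp D (\<theta> x u) \<gamma> \<in> der D tA (fst x) (cCmp T (snd x) (fst y2)) (snd y2)"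
    if x: "x \<in> cOb (Pl B)" and u: "u \<in> psh_ob Ln x" for x u
  proof -
    have v: "\<theta> x u \<in> der D tA (fst x) (cCmp T (snd x) (fst y1)) (snd y1)" using ntD1[OF \<theta> x u] by simp
    have "cCmp T (cCmp T (snd x) (fst y1)) (tA \<gamma>) = cCmp T (snd x) (fst y2)"
      using e T_assoc x yo der_T[OF ga] by auto
    then show ?thesis using der_idl[OF v] der_comp[OF v ga] by simp
  qed
  show ?thesis unfolding nat_trans_def
  proof (intro CollectI conjI ballI allI impI)
    fix x u assume x: "x \<in> cOb (Pl B)" and u: "u \<in> psh_ob Ln x"
    then show "psh_ar (perp_R D T tO tA B Ln) (y1, \<gamma>, y2) \<theta> x u \<in> psh_ob (der_left D T tA y2) x"
      using val[OF x u] by simp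
  next
    fix k u assume k: "k \<in> cAr (Pl B)" and u: "u \<in> psh_ob Ln (cCod (Pl B) k)"
    obtain x1 k\<beta> x2 where ke: "k = (x1,k\<beta>,x2)" by (rule arr_split)
    have k': "(x1,k\<beta>,x2) \<in> cAr (Pl B)" using k ke by simp
    have xo: "x1 \<in> cOb (Pl B)" "x2 \<in> cOb (Pl B)" using k' by (simp only: pl_ar)+
    obtain t where t: "t \<in> Cr x2" "u = Eq x2 `` {t}" using u ke by (auto elim: class_in)
    have u2: "u \<in> psh_ob Ln x2" using u ke by simp
    have u1: "psh_ar Ln k u \<in> psh_ob Ln x1"
      using Ln_ar_class[OF k' t(1)] mk_Cr[OF k' t(1)] ke t by (simp add: quotientI)
    have b1: "k\<beta> \<in> der D tA (fst x1) (tA k\<beta>) (fst x2)" using k' by simp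
    have v: "\<theta> x2 u \<in> der D tA (fst x2) (cCmp T (snd x2) (fst y1)) (snd y1)" using ntD1[OF \<theta> xo(2) u2] by simp
    have n: "\<theta> x1 (psh_ar Ln k u) = cCmp D (cCmp D k\<beta> (\<theta> x2 u)) (cId D (snd y1))"
      using ntD2[OF \<theta> k, of u] u ke by simp
    have n2: "cCmp D (cCmp D k\<beta> (\<theta> x2 u)) (cId D (snd y1)) = cCmp D k\<beta> (\<theta> x2 u)"
      using der_idr[OF der_comp[OF b1 v]] .
    have n3: "cCmp D (cCmp D k\<beta> (cCmp D (\<theta> x2 u) \<gamma>)) (cId D (snd y2)) = cCmp D k\<beta> (cCmp D (\<theta> x2 u) \<gamma>)"
      using der_idr[OF der_comp[OF b1 der_comp[OF v ga]]] .
    have n4: "cCmp D (cCmp D k\<beta> (\<theta> x2 u)) \<gamma> = cCmp D k\<beta> (cCmp D (\<theta> x2 u) \<gamma>)" using der_assoc[OF b1 v ga] .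
    show "psh_ar (perp_R D T tO tA B Ln) (y1, \<gamma>, y2) \<theta> (cDom (Pl B) k) (psh_ar Ln k u) =
          psh_ar (der_left D T tA y2) k (psh_ar (perp_R D T tO tA B Ln) (y1, \<gamma>, y2) \<theta> (cCod (Pl B) k) u)"
      using val[OF xo(1) u1] val[OF xo(2) u2] n n2 n3 n4 ke xo u1 u2 by simp
  next
    fix x u assume "x \<notin> cOb (Pl B) \<or> u \<notin> psh_ob Ln x"
    then show "psh_ar (perp_R D T tO tA B Ln) (y1, \<gamma>, y2) \<theta> x u = undefined" by auto
  qed
qed

abbreviation "PR \<equiv> perp_R D T tO tA B Ln"

definition Tb where
  "Tb y \<alpha> \<theta> = (if y \<in> cOb BM \<and> \<theta> \<in> nat_trans (Pl B) Ln (der_left D T tA y)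
                 then Ta y \<alpha> (\<theta> (P,c) u0) else undefined)"

definition "Theta_b = (\<lambda>(x::'do\<times>'tm) \<alpha> y \<theta>. Tb y \<alpha> \<theta>)"

lemma tu0: assumes "\<theta> \<in> nat_trans (Pl B) Ln (der_left D T tA y)"
  shows "\<theta> (P,c) u0 \<in> der D tA P (cCmp T c (fst y)) (snd y)"
  using ntD1[OF assms PcB u0_in] by simp

lemma Tb_in: assumes x: "x \<in> cOb (Pl B)" and al: "\<alpha> \<in> der D tA (fst x) (snd x) Pc"
  shows "(\<lambda>y \<theta>. Tb y \<alpha> \<theta>) \<in> nat_trans BM PR (der_right D T tA x)"
  unfolding nat_trans_def
proof (intro CollectI conjI ballI allI impI)
  fix y \<theta> assume y: "y \<in> cOb BM" and th: "\<theta> \<in> psh_ob PR y"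
  then show "Tb y \<alpha> \<theta> \<in> psh_ob (der_right D T tA x) y"
    using Ta_val[of "fst y" "snd y" "\<theta> (P,c) u0" \<alpha> "fst x" "snd x"] al tu0[of \<theta> y] by (simp add: Tb_def)
next
  fix g \<theta> assume g: "g \<in> cAr BM" and th: "\<theta> \<in> psh_ob PR (cCod BM g)"
  obtain d1 R1 \<gamma> d2 R2 where ge: "g = ((d1,R1),\<gamma>,(d2,R2))" by (rule trip)
  have g': "((d1,R1),\<gamma>,(d2,R2)) \<in> cAr BM" using g ge by simp
  have th': "\<theta> \<in> nat_trans (Pl B) Ln (der_left D T tA (d1,R1))" using th ge by simp
  have cl: "psh_ar PR g \<theta> \<in> nat_trans (Pl B) Ln (der_left D T tA (d2,R2))"
    using pR_close[OF g' th'] ge by simp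
  have a: "\<theta> (P,c) u0 \<in> der D tA P (cCmp T c d1) R1" using tu0[OF th'] by simp
  have ev: "psh_ar PR g \<theta> (P,c) u0 = cCmp D (\<theta> (P,c) u0) \<gamma>"
    using ge PcB u0_in der_idl[OF a] by simp
  have yo: "(d1,R1) \<in> cOb BM" "(d2,R2) \<in> cOb BM" using g' by (simp only: mi_ar)+
  show "Tb (cDom BM g) \<alpha> (psh_ar PR g \<theta>) = psh_ar (der_right D T tA x) g (Tb (cCod BM g) \<alpha> \<theta>)"
    using Ta_nat[OF g' a al] cl ev yo th' ge by (simp add: Tb_def)
next
  fix y \<theta> assume "y \<notin> cOb BM \<or> \<theta> \<notin> psh_ob PR y"
  then show "Tb y \<alpha> \<theta> = undefined" by (auto simp: Tb_def)
qed

lemma th0_PR: "th0 \<in> psh_ob PR y0" using th0_in by simp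

lemma inv_in_b: assumes x: "x \<in> cOb (Pl B)" and Ph: "\<Phi> \<in> nat_trans BM PR (der_right D T tA x)"
  shows "\<Phi> y0 th0 \<in> der D tA (fst x) (snd x) Pc"
proof -
  have "\<Phi> y0 th0 \<in> der D tA (fst x) (cCmp T (snd x) (cId T B)) Pc"
    using ntD1[OF Ph y0_ob th0_PR] by simp
  moreover have "cCmp T (snd x) (cId T B) = snd x" using x T_idr' by simp
  ultimately show ?thesis by simp
qed

lemma rt1_b: assumes x: "x \<in> cOb (Pl B)" and al: "\<alpha> \<in> der D tA (fst x) (snd x) Pc"
  shows "Tb y0 \<alpha> th0 = \<alpha>"
  using rt1_a[OF x al] y0_ob th0_in th0_u0 by (simp add: Tb_def)

lemma rt2_b: assumes x: "x \<in> cOb (Pl B)" and Ph: "\<Phi> \<in> nat_trans BM PR (der_right D T tA x)"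
  shows "(\<lambda>y \<theta>. Tb y (\<Phi> y0 th0) \<theta>) = \<Phi>"
proof (intro ext)
  fix y \<theta>
  show "Tb y (\<Phi> y0 th0) \<theta> = \<Phi> y \<theta>"
  proof (cases "y \<in> cOb BM \<and> \<theta> \<in> psh_ob PR y")
    case False then show ?thesis using ntD3[OF Ph False] by (auto simp: Tb_def)
  next
    case True
    obtain d R where ye: "y = (d,R)" by (cases y)
    have yo: "d\<in>cAr T" "cDom T d = B" "R\<in>cOb D" "cCod T d = tO R" using True ye by auto
    have th: "\<theta> \<in> nat_trans (Pl B) Ln (der_left D T tA (d,R))" using True ye by simp
    have yob: "(d,R) \<in> cOb BM" using True ye by simp
    define a where "a = \<theta> (P,c) u0"
    have a: "a \<in> der D tA P (cCmp T c d) R" using tu0[OF th] a_def by simp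
    define a1 where "a1 = pfi d R a"
    have a1: "a1 \<in> der D tA Pc d R" "cCmp D \<kappa> a1 = a" using pfi[OF yo a] a1_def by auto
    have g: "(y0, a1, (d,R)) \<in> cAr BM"
      using y0_ob True ye a1(1) T_idl'[of d B] yo by (auto simp: der_iff)
    have eq: "psh_ar PR (y0, a1, (d,R)) th0 = \<theta>"
    proof (intro ext)
      fix x u
      show "psh_ar PR (y0, a1, (d,R)) th0 x u = \<theta> x u"
      proof (cases "x \<in> cOb (Pl B) \<and> u \<in> psh_ob Ln x")
        case False then show ?thesis using ntD3[OF th False] by auto
      next
        case True
        then have xo: "x \<in> cOb (Pl B)" and u: "u \<in> Cr x // Eq x" by auto
        obtain t where t: "t \<in> Cr x" "u = Eq x `` {t}" using u by (auto elim: class_in)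
        obtain x0 f\<beta> a0 where te: "t = (x0, (x, f\<beta>, cplus_ob T c x0), a0)" "x0 \<in> cOb (Pl A)"
          "(x, f\<beta>, cplus_ob T c x0) \<in> cAr (Pl B)" "a0 \<in> der D tA (fst x0) (snd x0) P"
          using Cr_dest[OF t(1)] by metis
        note f = Cr_facts[OF te(3,2,4)]
        have k: "\<theta> x u = cCmp D (cCmp D f\<beta> a0) a" using key[OF th yob xo te] t(2) a_def by simp
        have h: "th0 x u = cCmp D (cCmp D f\<beta> a0) \<kappa>" using th0_class[OF xo t(1)] t(2) te(1) by simp
        have v: "cCmp D (cCmp D f\<beta> a0) \<kappa> \<in> der D tA (fst x) (cCmp T (cCmp T (tA f\<beta>) (snd x0)) c) Pc"
          using der_comp[OF f(3) pfD(3)] .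
        have "cCmp D (cCmp D (cId D (fst x)) (cCmp D (cCmp D f\<beta> a0) \<kappa>)) a1 =
              cCmp D (cCmp D (cCmp D f\<beta> a0) \<kappa>) a1" using der_idl[OF v] by simp
        also have "\<dots> = cCmp D (cCmp D f\<beta> a0) (cCmp D \<kappa> a1)" using der_assoc[OF f(3) pfD(3) a1(1)] .
        finally show ?thesis using True h k a1(2) by simp
      qed
    qed
    have "\<Phi> (d,R) (psh_ar PR (y0, a1, (d,R)) th0) = cCmp D (cCmp D (cId D (fst x)) (\<Phi> y0 th0)) a1"
      using ntD2[OF Ph g] th0_PR by simp
    moreover have "cCmp D (cId D (fst x)) (\<Phi> y0 th0) = \<Phi> y0 th0"
      using der_idl[OF inv_in_b[OF x Ph]] .
    ultimately have "\<Phi> (d,R) \<theta> = cCmp D (\<Phi> y0 th0) a1" using eq by simp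
    moreover have "Tb y (\<Phi> y0 th0) \<theta> = cCmp D (\<Phi> y0 th0) a1"
      using True ye a th a1_def a_def by (simp add: Tb_def Ta_def)
    ultimately show ?thesis using ye by simp
  qed
qed

lemma part_b: "nat_iso (Pl B) (plus_psh D tA Pc) (perp_L D T tO tA B PR)"
  unfolding nat_iso_def
proof (intro exI[of _ Theta_b] conjI ballI)
  fix x assume x: "x \<in> cOb (Pl B)"
  show "bij_betw (Theta_b x) (psh_ob (plus_psh D tA Pc) x) (psh_ob (perp_L D T tO tA B PR) x)"
    unfolding Theta_b_def
    apply (rule bij_betw_byWitness[where f'="\<lambda>\<Phi>. \<Phi> y0 th0"])
    using rt1_b[OF x] rt2_b[OF x] Tb_in[OF x] inv_in_b[OF x] by auto
next
  fix g a assume g: "g \<in> cAr (Pl B)" and a: "a \<in> psh_ob (plus_psh D tA Pc) (cCod (Pl B) g)"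
  obtain Q1 e1 \<beta> Q2 e2 where ge: "g = ((Q1,e1),\<beta>,(Q2,e2))" by (rule trip)
  show "Theta_b (cDom (Pl B) g) (psh_ar (plus_psh D tA Pc) g a) =
         psh_ar (perp_L D T tO tA B PR) g (Theta_b (cCod (Pl B) g) a)"
  proof -
    have "Tb y (cCmp D \<beta> a) \<theta> = (if y \<in> cOb BM \<and> \<theta> \<in> psh_ob PR y
       then psh_ar (der_left D T tA y) g (Tb y a \<theta>) else undefined)" for y \<theta>
    proof (cases "y \<in> cOb BM \<and> \<theta> \<in> psh_ob PR y")
      case True
      have gg: "((Q1,e1),\<beta>,(Q2,e2)) \<in> cAr (Pl B)" using g unfolding ge .
      have a'': "a \<in> der D tA Q2 e2 Pc" using a ge by simp
      from True have y: "y \<in> cOb BM" and th: "\<theta> \<in> nat_trans (Pl B) Ln (der_left D T tA y)" by auto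
      have a2: "\<theta> (P,c) u0 \<in> psh_ob \<psi> y" using tu0[OF th] by simp
      have "Tb y (cCmp D \<beta> a) \<theta> = Ta y (cCmp D \<beta> a) (\<theta> (P,c) u0)" using y th by (simp add: Tb_def)
      also have "\<dots> = cCmp D (cCmp D \<beta> (Ta y a (\<theta> (P,c) u0))) (cId D (snd y))"
        using Ta_natB[OF gg a'' y a2] .
      also have "\<dots> = cCmp D (cCmp D \<beta> (Tb y a \<theta>)) (cId D (snd y))" using y th by (simp add: Tb_def)
      finally show ?thesis unfolding if_P[OF True] ge dl_ar .
    next
      case False then show ?thesis unfolding Tb_def by auto
    qed
    note eq = this[unfolded ge]
    show ?thesis unfolding Theta_b_def ge pl_dom pl_cod pp_ar pL_ar by (intro ext) (rule eq)
  qed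
qed

end

theorem proposition4p13:
  fixes D :: "('do, 'dm) cat" and T :: "('to, 'tm) cat"
    and tO :: "'do \<Rightarrow> 'to" and tA :: "'dm \<Rightarrow> 'tm"
    and A B :: 'to and c :: 'tm and P Pc :: 'do and \<kappa> :: 'dm
  assumes "refinement_system D T tO tA"
    and "c \<in> cAr T" and "cDom T c = A" and "cCod T c = B"
    and "P \<in> cOb D" and "tO P = A"
    and "is_pushforward D T tO tA P c Pc \<kappa>"
  shows "nat_iso (plus_cat D T tO tA B) (plus_psh D tA Pc)
           (perp_L D T tO tA B (pb_psh (cminus_ob T c) (cminus_ar T c) (minus_psh D tA P)))
       \<and> nat_iso (plus_cat D T tO tA B) (plus_psh D tA Pc)
           (perp_L D T tO tA B (perp_R D T tO tA B
              (lan_psh (plus_cat D T tO tA A) (plus_cat D T tO tA B) (cplus_ob T c) (cplus_ar T c)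
                 (plus_psh D tA P))))"
proof -
  interpret ctx D T tO tA A B c P Pc \<kappa>
    using assms by (unfold_locales) auto
  show ?thesis using part_a part_b by simp
qed

end
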